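(* Let $N\ge 1$ and let $R(k_1,k_2)\in\mathrm{End}(\mathbb{C}^N\otimes\mathbb{C}^N)$ be a matrix-valued function of two real spectral parameters satisfying the Yang–Baxter equation $R_{12}(k_1,k_2)R_{13}(k_1,k_3)R_{23}(k_2,k_3)=R_{23}(k_2,k_3)R_{13}(k_1,k_3)R_{12}(k_1,k_2)$ and the unitarity condition $R_{12}(k_1,k_2)R_{21}(k_2,k_1)=\mathbb{I}\otimes\mathbb{I}$. Let $\mathcal{A}_R$ be the associated Zamolodchikov–Faddeev algebra and $T(k)$ its well-bred vertex operator (see context). Let $B(k)$ be a numerical $N\times N$ matrix-valued function such that $$R_{12}\,B_1\,R'_{21}\,B_2=B_2\,R'_{12}\,B_1\,\bar R_{21},\qquad B(k)B(-k)=\mathbb{I}_N .$$ Define $$\tilde a(k)=\tfrac12\big(a(k)+b(k)a(-k)\big),\quad \tilde a^\dagger(k)=\tfrac12\big(a^\dagger(k)+a^\dagger(-k)b(-k)\big),\quad b(k)=T(k)B(k)T(-k)^{-1}.$$ Then these elements satisfy the relations of the boundary algebra $\mathcal{B}_R$: $$\tilde a_1\tilde a_2=R_{21}\tilde a_2\tilde a_1,\qquad \tilde a^\dagger_1\tilde a^\dagger_2=\tilde a^\dagger_2\tilde a^\dagger_1R_{21},$$ $$\tilde a_1\tilde a^\dagger_2=\tilde a^\dagger_2R_{12}\tilde a_1+\tfrac12\delta_{12}+\tfrac12 b_{12},$$ $$\tilde a_1 b_2=R_{21}\,b_2\,R'_{12}\,\tilde a_1,\qquad b_1\tilde a^\dagger_2=\tilde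 a^\dagger_2\,R_{12}\,b_1\,R'_{21},$$ $$R_{12}\,b_1\,R'_{21}\,b_2=b_2\,R'_{12}\,b_1\,\bar R_{21},\qquad b(k)b(-k)=\mathbb{I}.$$
   Context: Notation: $e_i$ ($i=1,\dots,N$) is the standard column basis of $\mathbb{C}^N$, $e_i^\dagger$ the corresponding row vector, $E_{ij}$ the matrix units. Subscripts $1,2,3$ indicate the tensor factor of $\mathbb{C}^N$ on which a matrix acts and the spectral parameter $k_1,k_2,k_3$ attached: $R_{12}=R_{12}(k_1,k_2)$, $R_{21}=R_{21}(k_2,k_1)$ (i.e. $R$ acting in spaces $2,1$), $R'_{12}=R_{12}(k_1,-k_2)$, $R'_{21}=R_{21}(k_2,-k_1)$, $\bar R_{12}=R_{12}(-k_1,-k_2)$, $\bar R_{21}=R_{21}(-k_2,-k_1)$. For a matrix $M(k)$, $M_1=M(k_1)\otimes\mathbb{I}_N$, $M_2=\mathbb{I}_N\otimes M(k_2)$. ZF algebra $\mathcal{A}_R$: generators $a_i(k),a_i^\dagger(k)$, $i=1,\dots,N$, $k\in\mathbb{R}$; writing $a(k)=\sum_i a_i(k)e_i$ (column), $a^\dagger(k)=\sum_i a_i^\dagger(k)e_i^\dagger$ (row), $a_1=\sum_i a_i(k_1)e_i\otimes\mathbb{I}$, $a_2=\sum_i a_i(k_2)\mathbb{I}\otimes e_i$, similarly $a_1^\dagger,a_2^\dagger$, and $\delta_{12}=\delta(k_1-k_2)\sum_i e_i\otimes e_i^\dagger$, the relations are $a_1a_2=R_{21}a_2a_1$, $a_1^\dagger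 a_2^\dagger=a_2^\dagger a_1^\dagger R_{21}$, $a_1a_2^\dagger=a_2^\dagger R_{12}a_1+\delta_{12}$. Well-bred vertex operator: $T(k)=\sum_{i,j}T^{ij}(k)E_{ij}$, an invertible $N\times N$ matrix with entries in (a completion of) $\mathcal{A}_R$ (given by a normally ordered series in $a^\dagger,a$ with leading term $\mathbb{I}$), satisfying $T_1a_2=R_{21}a_2T_1$, $T_1a_2^\dagger=a_2^\dagger R_{12}T_1$, $R_{12}T_1T_2=T_2T_1R_{12}$. Also $b_1(k)=\sum_{ij}b_{ij}(k)E_{ij}\otimes\mathbb{I}$, $b_2(k)=\sum_{ij}b_{ij}(k)\mathbb{I}\otimes E_{ij}$, $\tilde a_1,\tilde a_2,\tilde a^\dagger_1,\tilde a^\dagger_2$ as for $a$, and $b_{12}=\delta(k_1+k_2)\sum_{i,j}b_{ij}(k_1)\,e_i\otimes e_j^\dagger$. *)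

theory Defs
  imports Complex_Main
begin

text \<open>Indices of the standard basis of C^N are 0,...,N-1.
A matrix on C^N (x) C^N is a function X i j p q giving the entry
(e_i (x) e_j)^T X (e_p (x) e_q). The R-matrix is R x y i j p q = entry of R_12(x,y).
The ring 'A plays the role of (a completion of) the ZF algebra; complex scalars act
through the central unital ring homomorphism sc; the delta distribution delta(x) is
modelled by a central element dl x that vanishes for x /= 0 and is even.\<close>

definition kd :: "nat \<Rightarrow> nat \<Rightarrow> 'a::zero_neq_one" where
  "kd i j = (if i = j then 1 else 0)"

definition mul2 :: "nat \<Rightarrow> (nat \<Rightarrow> nat \<Rightarrow> nat \<Rightarrow> nat \<Rightarrow> 'a::semiring_0)
   \<Rightarrow> (nat \<Rightarrow> nat \<Rightarrow> nat \<Rightarrow> nat \<Rightarrow> 'a) \<Rightarrow> (nat \<Rightarrow> nat \<Rightarrow> nat \<Rightarrow> nat \<Rightarrow> 'a)" where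
  "mul2 N X Y = (\<lambda>i j p q. \<Sum>r<N. \<Sum>s<N. X i j r s * Y r s p q)"

text \<open>M_1 = M (x) I and M_2 = I (x) M.\<close>
definition op_1 :: "(nat \<Rightarrow> nat \<Rightarrow> 'a::zero) \<Rightarrow> (nat \<Rightarrow> nat \<Rightarrow> nat \<Rightarrow> nat \<Rightarrow> 'a)" where
  "op_1 M = (\<lambda>i j p q. if j = q then M i p else 0)"

definition op_2 :: "(nat \<Rightarrow> nat \<Rightarrow> 'a::zero) \<Rightarrow> (nat \<Rightarrow> nat \<Rightarrow> nat \<Rightarrow> nat \<Rightarrow> 'a)" where
  "op_2 M = (\<lambda>i j p q. if i = p then M j q else 0)"

text \<open>R_21(x,y) = P R_12(x,y) P (R acting in spaces 2,1).\<close>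
definition op21 :: "(real \<Rightarrow> real \<Rightarrow> nat \<Rightarrow> nat \<Rightarrow> nat \<Rightarrow> nat \<Rightarrow> 'a)
   \<Rightarrow> real \<Rightarrow> real \<Rightarrow> (nat \<Rightarrow> nat \<Rightarrow> nat \<Rightarrow> nat \<Rightarrow> 'a)" where
  "op21 R x y = (\<lambda>i j p q. R x y j i q p)"

definition id2 :: "nat \<Rightarrow> nat \<Rightarrow> nat \<Rightarrow> nat \<Rightarrow> 'a::semiring_1" where
  "id2 i j p q = kd i p * kd j q"

definition eq2 :: "nat \<Rightarrow> (nat \<Rightarrow> nat \<Rightarrow> nat \<Rightarrow> nat \<Rightarrow> 'a) \<Rightarrow> (nat \<Rightarrow> nat \<Rightarrow> nat \<Rightarrow> nat \<Rightarrow> 'a) \<Rightarrow> bool" where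
  "eq2 N X Y \<longleftrightarrow> (\<forall>i<N. \<forall>j<N. \<forall>p<N. \<forall>q<N. X i j p q = Y i j p q)"

definition yang_baxter :: "nat \<Rightarrow> (real \<Rightarrow> real \<Rightarrow> nat \<Rightarrow> nat \<Rightarrow> nat \<Rightarrow> nat \<Rightarrow> complex) \<Rightarrow> bool" where
  "yang_baxter N R \<longleftrightarrow> (\<forall>k1 k2 k3. \<forall>i<N. \<forall>j<N. \<forall>l<N. \<forall>p<N. \<forall>q<N. \<forall>m<N.
     (\<Sum>a<N. \<Sum>b<N. \<Sum>f<N. R k1 k2 i j a b * R k1 k3 a l p f * R k2 k3 b f q m)
   = (\<Sum>b<N. \<Sum>c<N. \<Sum>d<N. R k2 k3 j l b c * R k1 k3 i c d m * R k1 k2 d b p q))"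

definition unitary_R :: "nat \<Rightarrow> (real \<Rightarrow> real \<Rightarrow> nat \<Rightarrow> nat \<Rightarrow> nat \<Rightarrow> nat \<Rightarrow> complex) \<Rightarrow> bool" where
  "unitary_R N R \<longleftrightarrow> (\<forall>k1 k2. eq2 N (mul2 N (R k1 k2) (op21 R k2 k1)) id2)"

definition refl_eq :: "nat \<Rightarrow> (real \<Rightarrow> real \<Rightarrow> nat \<Rightarrow> nat \<Rightarrow> nat \<Rightarrow> nat \<Rightarrow> 'a::semiring_0)
    \<Rightarrow> (real \<Rightarrow> nat \<Rightarrow> nat \<Rightarrow> 'a) \<Rightarrow> bool" where
  "refl_eq N R X \<longleftrightarrow> (\<forall>k1 k2.
     eq2 N (mul2 N (mul2 N (mul2 N (R k1 k2) (op_1 (X k1))) (op21 R k2 (-k1))) (op_2 (X k2)))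
           (mul2 N (mul2 N (mul2 N (op_2 (X k2)) (R k1 (-k2))) (op_1 (X k1))) (op21 R (-k2) (-k1))))"

definition inv_pair :: "nat \<Rightarrow> (real \<Rightarrow> nat \<Rightarrow> nat \<Rightarrow> 'a::semiring_1) \<Rightarrow> bool" where
  "inv_pair N X \<longleftrightarrow> (\<forall>k. \<forall>i<N. \<forall>j<N. (\<Sum>p<N. X k i p * X (-k) p j) = kd i j)"

definition scalars :: "(complex \<Rightarrow> 'A::ring_1) \<Rightarrow> bool" where
  "scalars sc \<longleftrightarrow> sc 1 = 1 \<and> (\<forall>x y. sc (x + y) = sc x + sc y) \<and> (\<forall>x y. sc (x * y) = sc x * sc y)
     \<and> (\<forall>c y. sc c * y = y * sc c)"

definition delta_like :: "(real \<Rightarrow> 'A::ring_1) \<Rightarrow> bool" where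
  "delta_like dl \<longleftrightarrow> (\<forall>x. x \<noteq> 0 \<longrightarrow> dl x = 0) \<and> (\<forall>x. dl (-x) = dl x) \<and> (\<forall>x y. dl x * y = y * dl x)"

definition rel_aa :: "nat \<Rightarrow> (real \<Rightarrow> real \<Rightarrow> nat \<Rightarrow> nat \<Rightarrow> nat \<Rightarrow> nat \<Rightarrow> 'A::ring_1)
   \<Rightarrow> (nat \<Rightarrow> real \<Rightarrow> 'A) \<Rightarrow> bool" where
  "rel_aa N Rs x \<longleftrightarrow> (\<forall>k1 k2. \<forall>i<N. \<forall>j<N.
     x i k1 * x j k2 = (\<Sum>p<N. \<Sum>q<N. Rs k2 k1 j i q p * x q k2 * x p k1))"

definition rel_dd :: "nat \<Rightarrow> (real \<Rightarrow> real \<Rightarrow> nat \<Rightarrow> nat \<Rightarrow> nat \<Rightarrow> nat \<Rightarrow> 'A::ring_1)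
   \<Rightarrow> (nat \<Rightarrow> real \<Rightarrow> 'A) \<Rightarrow> bool" where
  "rel_dd N Rs y \<longleftrightarrow> (\<forall>k1 k2. \<forall>i<N. \<forall>j<N.
     y i k1 * y j k2 = (\<Sum>p<N. \<Sum>q<N. y q k2 * y p k1 * Rs k2 k1 q p j i))"

definition rel_ad :: "nat \<Rightarrow> (real \<Rightarrow> real \<Rightarrow> nat \<Rightarrow> nat \<Rightarrow> nat \<Rightarrow> nat \<Rightarrow> 'A::ring_1)
   \<Rightarrow> (nat \<Rightarrow> real \<Rightarrow> 'A) \<Rightarrow> (nat \<Rightarrow> real \<Rightarrow> 'A) \<Rightarrow> (real \<Rightarrow> real \<Rightarrow> nat \<Rightarrow> nat \<Rightarrow> 'A) \<Rightarrow> bool" where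
  "rel_ad N Rs x y D \<longleftrightarrow> (\<forall>k1 k2. \<forall>i<N. \<forall>j<N.
     x i k1 * y j k2 = (\<Sum>p<N. \<Sum>q<N. y q k2 * Rs k1 k2 i q p j * x p k1) + D k1 k2 i j)"

definition well_bred :: "nat \<Rightarrow> (real \<Rightarrow> real \<Rightarrow> nat \<Rightarrow> nat \<Rightarrow> nat \<Rightarrow> nat \<Rightarrow> 'A::ring_1)
   \<Rightarrow> (nat \<Rightarrow> real \<Rightarrow> 'A) \<Rightarrow> (nat \<Rightarrow> real \<Rightarrow> 'A) \<Rightarrow> (real \<Rightarrow> nat \<Rightarrow> nat \<Rightarrow> 'A) \<Rightarrow> bool" where
  "well_bred N Rs a ad T \<longleftrightarrow>
    (\<forall>k1 k2. \<forall>i<N. \<forall>j<N. \<forall>r<N.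
        T k1 i r * a j k2 = (\<Sum>p<N. \<Sum>q<N. Rs k2 k1 j i q p * a q k2 * T k1 p r)) \<and>
    (\<forall>k1 k2. \<forall>i<N. \<forall>j<N. \<forall>r<N.
        T k1 i r * ad j k2 = (\<Sum>p<N. \<Sum>q<N. ad q k2 * Rs k1 k2 i q p j * T k1 p r)) \<and>
    (\<forall>k1 k2. eq2 N (mul2 N (Rs k1 k2) (mul2 N (op_1 (T k1)) (op_2 (T k2))))
                  (mul2 N (mul2 N (op_2 (T k2)) (op_1 (T k1))) (Rs k1 k2)))"

definition is_inverse :: "nat \<Rightarrow> (real \<Rightarrow> nat \<Rightarrow> nat \<Rightarrow> 'A::ring_1) \<Rightarrow> (real \<Rightarrow> nat \<Rightarrow> nat \<Rightarrow> 'A) \<Rightarrow> bool" where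
  "is_inverse N T Tinv \<longleftrightarrow> (\<forall>k. \<forall>i<N. \<forall>j<N.
     (\<Sum>p<N. T k i p * Tinv k p j) = kd i j \<and> (\<Sum>p<N. Tinv k i p * T k p j) = kd i j)"

definition bmat :: "nat \<Rightarrow> (complex \<Rightarrow> 'A::ring_1) \<Rightarrow> (real \<Rightarrow> nat \<Rightarrow> nat \<Rightarrow> 'A) \<Rightarrow> (real \<Rightarrow> nat \<Rightarrow> nat \<Rightarrow> 'A)
   \<Rightarrow> (real \<Rightarrow> nat \<Rightarrow> nat \<Rightarrow> complex) \<Rightarrow> real \<Rightarrow> nat \<Rightarrow> nat \<Rightarrow> 'A" where
  "bmat N sc T Tinv B k i j = (\<Sum>p<N. \<Sum>q<N. T k i p * sc (B k p q) * Tinv (-k) q j)"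

definition a_tilde :: "nat \<Rightarrow> (complex \<Rightarrow> 'A::ring_1) \<Rightarrow> (nat \<Rightarrow> real \<Rightarrow> 'A) \<Rightarrow> (real \<Rightarrow> nat \<Rightarrow> nat \<Rightarrow> 'A)
   \<Rightarrow> nat \<Rightarrow> real \<Rightarrow> 'A" where
  "a_tilde N sc a b i k = sc (1/2) * (a i k + (\<Sum>p<N. b k i p * a p (-k)))"

definition ad_tilde :: "nat \<Rightarrow> (complex \<Rightarrow> 'A::ring_1) \<Rightarrow> (nat \<Rightarrow> real \<Rightarrow> 'A) \<Rightarrow> (real \<Rightarrow> nat \<Rightarrow> nat \<Rightarrow> 'A)
   \<Rightarrow> nat \<Rightarrow> real \<Rightarrow> 'A" where
  "ad_tilde N sc ad b j k = sc (1/2) * (ad j k + (\<Sum>p<N. ad p (-k) * b (-k) p j))"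

end

theory Submission
  imports Defs
begin


definition tr :: "nat \<Rightarrow> (nat\<Rightarrow>nat\<Rightarrow>nat\<Rightarrow>nat\<Rightarrow>'a::zero) \<Rightarrow> (nat\<Rightarrow>nat\<Rightarrow>nat\<Rightarrow>nat\<Rightarrow>'a)" where
 "tr N X = (\<lambda>i j p q. if i<N \<and> j<N \<and> p<N \<and> q<N then X i j p q else 0)"

lemma swap4: "(\<Sum>r<N. \<Sum>s<N. \<Sum>r'<N. \<Sum>s'<N. f r s r' s') = (\<Sum>r'<N. \<Sum>s'<N. \<Sum>r<N. \<Sum>s<N. (f r s r' s' :: 'a::comm_monoid_add))"
proof -
  have "(\<Sum>r<N. \<Sum>s<N. \<Sum>r'<N. \<Sum>s'<N. f r s r' s') = (\<Sum>r<N. \<Sum>r'<N. \<Sum>s<N. \<Sum>s'<N. f r s r' s')"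
    by (rule sum.cong[OF refl], rule sum.swap)
  also have "\<dots> = (\<Sum>r'<N. \<Sum>r<N. \<Sum>s<N. \<Sum>s'<N. f r s r' s')" by (rule sum.swap)
  also have "\<dots> = (\<Sum>r'<N. \<Sum>r<N. \<Sum>s'<N. \<Sum>s<N. f r s r' s')"
    by (rule sum.cong[OF refl], rule sum.cong[OF refl], rule sum.swap)
  also have "\<dots> = (\<Sum>r'<N. \<Sum>s'<N. \<Sum>r<N. \<Sum>s<N. f r s r' s')"
    by (rule sum.cong[OF refl], rule sum.swap)
  finally show ?thesis .
qed

lemma mul2_assoc: "mul2 N (mul2 N X Y) Z = mul2 N X (mul2 N Y (Z::nat\<Rightarrow>nat\<Rightarrow>nat\<Rightarrow>nat\<Rightarrow>'a::semiring_0))"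
proof -
  have "(\<Sum>r<N. \<Sum>s<N. (\<Sum>r'<N. \<Sum>s'<N. X i j r' s' * Y r' s' r s) * Z r s p q)
      = (\<Sum>r'<N. \<Sum>s'<N. X i j r' s' * (\<Sum>r<N. \<Sum>s<N. Y r' s' r s * Z r s p q))" for i j p q
  proof -
    have "(\<Sum>r<N. \<Sum>s<N. (\<Sum>r'<N. \<Sum>s'<N. X i j r' s' * Y r' s' r s) * Z r s p q)
       = (\<Sum>r<N. \<Sum>s<N. \<Sum>r'<N. \<Sum>s'<N. X i j r' s' * Y r' s' r s * Z r s p q)"
      by (simp add: sum_distrib_right)
    also have "\<dots> = (\<Sum>r'<N. \<Sum>s'<N. \<Sum>r<N. \<Sum>s<N. X i j r' s' * Y r' s' r s * Z r s p q)"
      by (rule swap4)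
    also have "\<dots> = (\<Sum>r'<N. \<Sum>s'<N. X i j r' s' * (\<Sum>r<N. \<Sum>s<N. Y r' s' r s * Z r s p q))"
      by (simp add: sum_distrib_left mult.assoc)
    finally show ?thesis .
  qed
  then show ?thesis unfolding mul2_def by (intro ext) simp
qed



definition o1 :: "nat \<Rightarrow> (nat\<Rightarrow>nat\<Rightarrow>'a::zero) \<Rightarrow> (nat\<Rightarrow>nat\<Rightarrow>nat\<Rightarrow>nat\<Rightarrow>'a)" where
  "o1 N X = tr N (op_1 X)"
definition o2 :: "nat \<Rightarrow> (nat\<Rightarrow>nat\<Rightarrow>'a::zero) \<Rightarrow> (nat\<Rightarrow>nat\<Rightarrow>nat\<Rightarrow>nat\<Rightarrow>'a)" where
  "o2 N X = tr N (op_2 X)"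
definition fl :: "(nat\<Rightarrow>nat\<Rightarrow>nat\<Rightarrow>nat\<Rightarrow>'a) \<Rightarrow> (nat\<Rightarrow>nat\<Rightarrow>nat\<Rightarrow>nat\<Rightarrow>'a)" where
  "fl X = (\<lambda>i j p q. X j i q p)"
definition mm1 :: "nat \<Rightarrow> (nat\<Rightarrow>nat\<Rightarrow>'a::semiring_0) \<Rightarrow> (nat\<Rightarrow>nat\<Rightarrow>'a) \<Rightarrow> (nat\<Rightarrow>nat\<Rightarrow>'a)" where
  "mm1 N X Y = (\<lambda>i p. \<Sum>r<N. X i r * Y r p)"
definition padd :: "(nat\<Rightarrow>nat\<Rightarrow>nat\<Rightarrow>nat\<Rightarrow>'a::plus) \<Rightarrow> (nat\<Rightarrow>nat\<Rightarrow>nat\<Rightarrow>nat\<Rightarrow>'a) \<Rightarrow> (nat\<Rightarrow>nat\<Rightarrow>nat\<Rightarrow>nat\<Rightarrow>'a)" where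
  "padd X Y = (\<lambda>i j p q. X i j p q + Y i j p q)"
definition cm :: "'a::times \<Rightarrow> (nat\<Rightarrow>nat\<Rightarrow>nat\<Rightarrow>nat\<Rightarrow>'a) \<Rightarrow> (nat\<Rightarrow>nat\<Rightarrow>nat\<Rightarrow>nat\<Rightarrow>'a)" where
  "cm c X = (\<lambda>i j p q. c * X i j p q)"
definition I2 :: "nat \<Rightarrow> (nat\<Rightarrow>nat\<Rightarrow>nat\<Rightarrow>nat\<Rightarrow>'a::semiring_1)" where
  "I2 N = tr N id2"
definition okk :: "nat \<Rightarrow> (nat\<Rightarrow>nat\<Rightarrow>nat\<Rightarrow>nat\<Rightarrow>'a::zero) \<Rightarrow> bool" where
  "okk N X \<longleftrightarrow> tr N X = X"
definition central :: "'a::times \<Rightarrow> bool" where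
  "central c \<longleftrightarrow> (\<forall>y. c * y = y * c)"

lemma if_mult_l: "(if P then x else 0) * (y::'a::semiring_0) = (if P then x * y else 0)" by simp
lemma if_mult_r: "(y::'a::semiring_0) * (if P then x else 0) = (if P then y * x else 0)" by simp

lemma sum_if_out: "(\<Sum>s\<in>A. if P then f s else 0) = (if P then (\<Sum>s\<in>A. f s) else (0::'a::comm_monoid_add))"
  by simp

lemmas ifsimps = if_mult_l if_mult_r sum_if_out sum.delta sum.delta'

lemma tr_mul2: "tr N (mul2 N X Y) = mul2 N (tr N X) (tr N (Y::nat\<Rightarrow>nat\<Rightarrow>nat\<Rightarrow>nat\<Rightarrow>'a::semiring_0))"
  unfolding tr_def mul2_def by (intro ext) (auto intro!: sum.cong)

lemma okk_mul2: "okk N (mul2 N X (Y::nat\<Rightarrow>nat\<Rightarrow>nat\<Rightarrow>nat\<Rightarrow>'a::semiring_0))" if "okk N X" "okk N Y"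
  using that unfolding okk_def by (simp add: tr_mul2)

lemma okk_tr[simp]: "okk N (tr N X)" unfolding okk_def tr_def by (intro ext) simp
lemma okk_o1[simp]: "okk N (o1 N X)" unfolding o1_def by simp
lemma okk_o2[simp]: "okk N (o2 N X)" unfolding o2_def by simp
lemma okk_I2[simp]: "okk N (I2 N)" unfolding I2_def by simp
lemma okkD: "okk N X \<Longrightarrow> \<not>(i<N \<and> j<N \<and> p<N \<and> q<N) \<Longrightarrow> X i j p q = 0"
proof -
  assume "okk N X" "\<not>(i<N \<and> j<N \<and> p<N \<and> q<N)"
  then have "X i j p q = tr N X i j p q" by (simp add: okk_def)
  then show ?thesis using \<open>\<not>(i<N \<and> j<N \<and> p<N \<and> q<N)\<close> by (simp add: tr_def)
qed
lemma okkI: "(\<And>i j p q. \<not>(i<N \<and> j<N \<and> p<N \<and> q<N) \<Longrightarrow> X i j p q = 0) \<Longrightarrow> okk N X"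
  unfolding okk_def tr_def by (intro ext) auto

lemma okk_padd[simp]: "okk N X \<Longrightarrow> okk N Y \<Longrightarrow> okk N (padd X (Y::nat\<Rightarrow>nat\<Rightarrow>nat\<Rightarrow>nat\<Rightarrow>'a::monoid_add))"
  by (rule okkI) (simp add: padd_def okkD)
lemma okk_cm[simp]: "okk N X \<Longrightarrow> okk N (cm c (X::nat\<Rightarrow>nat\<Rightarrow>nat\<Rightarrow>nat\<Rightarrow>'a::mult_zero))"
  by (rule okkI) (simp add: cm_def okkD)
lemma okk_fl[simp]: "okk N X \<Longrightarrow> okk N (fl X)"
  unfolding fl_def by (rule okkI, rule okkD, auto)

lemma I2_left: "okk N X \<Longrightarrow> mul2 N (I2 N) X = (X::nat\<Rightarrow>nat\<Rightarrow>nat\<Rightarrow>nat\<Rightarrow>'a::semiring_1)"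
proof (intro ext)
  fix i j p q assume "okk N X"
  have "mul2 N (I2 N) X i j p q = (if i<N \<and> j<N then X i j p q else 0)"
    unfolding mul2_def I2_def tr_def id2_def kd_def by (simp add: ifsimps)
  then show "mul2 N (I2 N) X i j p q = X i j p q" using okkD[OF \<open>okk N X\<close>] by auto
qed

lemma I2_right: "okk N X \<Longrightarrow> mul2 N X (I2 N) = (X::nat\<Rightarrow>nat\<Rightarrow>nat\<Rightarrow>nat\<Rightarrow>'a::semiring_1)"
proof (intro ext)
  fix i j p q assume "okk N X"
  have "mul2 N X (I2 N) i j p q = (if p<N \<and> q<N then X i j p q else 0)"
    unfolding mul2_def I2_def tr_def id2_def kd_def by (simp add: ifsimps)
  then show "mul2 N X (I2 N) i j p q = X i j p q" using okkD[OF \<open>okk N X\<close>] by auto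
qed

lemma o1_o2_entry: "mul2 N (o1 N X) (o2 N Y) i j p q = (if i<N\<and>j<N\<and>p<N\<and>q<N then X i p * (Y j q::'a::semiring_0) else 0)"
  unfolding mul2_def o1_def o2_def tr_def op_1_def op_2_def
  by (simp add: ifsimps)

lemma o2_o1_entry: "mul2 N (o2 N Y) (o1 N X) i j p q = (if i<N\<and>j<N\<and>p<N\<and>q<N then Y j q * (X i p::'a::semiring_0) else 0)"
  unfolding mul2_def o1_def o2_def tr_def op_1_def op_2_def
  by (simp add: ifsimps)

lemma o1_mul: "mul2 N (o1 N X) (o1 N Y) = o1 N (mm1 N X (Y::nat\<Rightarrow>nat\<Rightarrow>'a::semiring_0))"
  unfolding mul2_def o1_def tr_def op_1_def mm1_def by (intro ext) (simp add: ifsimps)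
lemma o2_mul: "mul2 N (o2 N X) (o2 N Y) = o2 N (mm1 N X (Y::nat\<Rightarrow>nat\<Rightarrow>'a::semiring_0))"
  unfolding mul2_def o2_def tr_def op_2_def mm1_def by (intro ext) (simp add: ifsimps)

lemma o1_o2_comm:
  assumes "\<And>i p j q. i<N \<Longrightarrow> p<N \<Longrightarrow> j<N \<Longrightarrow> q<N \<Longrightarrow> X i p * Y j q = Y j q * X i p"
  shows "mul2 N (o1 N X) (o2 N Y) = mul2 N (o2 N Y) (o1 N (X::nat\<Rightarrow>nat\<Rightarrow>'a::semiring_0))"
  by (intro ext) (simp add: o1_o2_entry o2_o1_entry assms)

lemma fl_mul2: "fl (mul2 N X Y) = mul2 N (fl X) (fl (Y::nat\<Rightarrow>nat\<Rightarrow>nat\<Rightarrow>nat\<Rightarrow>'a::semiring_0))"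
  unfolding fl_def mul2_def by (intro ext) (rule sum.swap)
lemma fl_tr: "fl (tr N X) = tr N (fl X)" unfolding fl_def tr_def by (intro ext) auto
lemma fl_o1[simp]: "fl (o1 N X) = o2 N X" unfolding fl_def o1_def o2_def tr_def op_1_def op_2_def by (intro ext) auto
lemma fl_o2[simp]: "fl (o2 N X) = o1 N X" unfolding fl_def o1_def o2_def tr_def op_1_def op_2_def by (intro ext) auto
lemma fl_fl[simp]: "fl (fl X) = X" unfolding fl_def by simp
lemma fl_I2[simp]: "fl (I2 N) = (I2 N :: nat\<Rightarrow>nat\<Rightarrow>nat\<Rightarrow>nat\<Rightarrow>'a::semiring_1)"
  unfolding fl_def I2_def tr_def id2_def by (intro ext) (auto simp: kd_def)
lemma fl_padd: "fl (padd X Y) = padd (fl X) (fl Y)" unfolding fl_def padd_def by simp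
lemma fl_cm: "fl (cm c X) = cm c (fl X)" unfolding fl_def cm_def by simp

lemma padd_mul2: "mul2 N (padd X Y) Z = padd (mul2 N X Z) (mul2 N Y (Z::nat\<Rightarrow>nat\<Rightarrow>nat\<Rightarrow>nat\<Rightarrow>'a::semiring_0))"
  unfolding padd_def mul2_def by (intro ext) (simp add: distrib_right sum.distrib)
lemma mul2_padd: "mul2 N Z (padd X Y) = padd (mul2 N Z X) (mul2 N Z (Y::nat\<Rightarrow>nat\<Rightarrow>nat\<Rightarrow>nat\<Rightarrow>'a::semiring_0))"
  unfolding padd_def mul2_def by (intro ext) (simp add: distrib_left sum.distrib)
lemma cm_mul2: "mul2 N (cm c X) Z = cm c (mul2 N X (Z::nat\<Rightarrow>nat\<Rightarrow>nat\<Rightarrow>nat\<Rightarrow>'a::semiring_0))"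
  unfolding cm_def mul2_def by (intro ext) (simp add: sum_distrib_left mult.assoc)
lemma central_mid: "central c \<Longrightarrow> z * (c * x) = c * (z * (x::'a::semigroup_mult))"
  unfolding central_def by (metis mult.assoc)
lemma mul2_cm: "central c \<Longrightarrow> mul2 N Z (cm c X) = cm c (mul2 N Z (X::nat\<Rightarrow>nat\<Rightarrow>nat\<Rightarrow>nat\<Rightarrow>'a::semiring_0))"
  unfolding cm_def mul2_def by (intro ext) (simp add: sum_distrib_left central_mid)

lemma o1_kd: "(\<And>i j. i<N \<Longrightarrow> j<N \<Longrightarrow> X i j = kd i j) \<Longrightarrow> o1 N X = (I2 N::nat\<Rightarrow>nat\<Rightarrow>nat\<Rightarrow>nat\<Rightarrow>'a::semiring_1)"
  unfolding o1_def I2_def tr_def op_1_def id2_def by (intro ext) (auto simp: kd_def)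
lemma o2_kd: "(\<And>i j. i<N \<Longrightarrow> j<N \<Longrightarrow> X i j = kd i j) \<Longrightarrow> o2 N X = (I2 N::nat\<Rightarrow>nat\<Rightarrow>nat\<Rightarrow>nat\<Rightarrow>'a::semiring_1)"
  unfolding o2_def I2_def tr_def op_2_def id2_def by (intro ext) (auto simp: kd_def)

lemma mm1_assoc: "mm1 N (mm1 N X Y) Z = mm1 N X (mm1 N Y (Z::nat\<Rightarrow>nat\<Rightarrow>'a::semiring_0))"
proof (intro ext)
  fix i p
  have "(\<Sum>r<N. (\<Sum>s<N. X i s * Y s r) * Z r p) = (\<Sum>r<N. \<Sum>s<N. X i s * Y s r * Z r p)"
    by (simp add: sum_distrib_right)
  also have "\<dots> = (\<Sum>s<N. \<Sum>r<N. X i s * Y s r * Z r p)" by (rule sum.swap)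
  also have "\<dots> = (\<Sum>s<N. X i s * (\<Sum>r<N. Y s r * Z r p))" by (simp add: sum_distrib_left mult.assoc)
  finally show "mm1 N (mm1 N X Y) Z i p = mm1 N X (mm1 N Y Z) i p" unfolding mm1_def .
qed

lemma E_o1L: "mul2 N (o1 N X) Z i j p q = (if i<N \<and> j<N then \<Sum>r<N. X i r * (Z r j p q::'a::semiring_0) else 0)"
  unfolding mul2_def o1_def tr_def op_1_def by (simp add: ifsimps)
lemma E_o2L: "mul2 N (o2 N X) Z i j p q = (if i<N \<and> j<N then \<Sum>s<N. X j s * (Z i s p q::'a::semiring_0) else 0)"
  unfolding mul2_def o2_def tr_def op_2_def by (simp add: ifsimps)
lemma E_o1R: "mul2 N Z (o1 N X) i j p q = (if p<N \<and> q<N then \<Sum>r<N. Z i j r q * (X r p::'a::semiring_0) else 0)"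
  unfolding mul2_def o1_def tr_def op_1_def by (simp add: ifsimps)
lemma E_o2R: "mul2 N Z (o2 N X) i j p q = (if p<N \<and> q<N then \<Sum>s<N. Z i j p s * (X s q::'a::semiring_0) else 0)"
  unfolding mul2_def o2_def tr_def op_2_def by (simp add: ifsimps)
lemma E_trL: "mul2 N (tr N X) Z i j p q = (if i<N \<and> j<N then \<Sum>r<N. \<Sum>s<N. X i j r s * (Z r s p q::'a::semiring_0) else 0)"
  unfolding mul2_def tr_def by (simp add: ifsimps)
lemma E_trR: "mul2 N Z (tr N X) i j p q = (if p<N \<and> q<N then \<Sum>r<N. \<Sum>s<N. Z i j r s * (X r s p q::'a::semiring_0) else 0)"
  unfolding mul2_def tr_def by (simp add: ifsimps)

lemma eq2_tr: "eq2 N X Y \<Longrightarrow> tr N X = tr N Y"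
  unfolding eq2_def tr_def by (intro ext) auto
lemma tr_eq2: "tr N X = tr N Y \<Longrightarrow> eq2 N X Y"
  unfolding eq2_def tr_def by (metis)

lemma tr_fl: "tr N (fl X) = fl (tr N X)" unfolding fl_def tr_def by (intro ext) auto
lemma okk_eq: "okk N X \<Longrightarrow> tr N X = X" unfolding okk_def by simp
lemma tr_tr[simp]: "tr N (tr N X) = tr N X" unfolding tr_def by (intro ext) auto

lemma tl2: "mul2 N X Y = Z \<Longrightarrow> mul2 N X (mul2 N Y W) = mul2 N Z (W::nat\<Rightarrow>nat\<Rightarrow>nat\<Rightarrow>nat\<Rightarrow>'a::semiring_0)"
  by (metis mul2_assoc)
lemma tlI: "mul2 N X Y = I2 N \<Longrightarrow> okk N W \<Longrightarrow> mul2 N X (mul2 N Y W) = (W::nat\<Rightarrow>nat\<Rightarrow>nat\<Rightarrow>nat\<Rightarrow>'a::semiring_1)"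
  by (metis mul2_assoc I2_left)
lemmas okks = okk_o1 okk_o2 okk_mul2 okk_padd okk_cm okk_I2 okk_fl okk_tr



locale ZF =
  fixes N :: nat
    and R :: "real \<Rightarrow> real \<Rightarrow> nat \<Rightarrow> nat \<Rightarrow> nat \<Rightarrow> nat \<Rightarrow> complex"
    and sc :: "complex \<Rightarrow> 'A::ring_1"
    and dl :: "real \<Rightarrow> 'A"
    and a ad :: "nat \<Rightarrow> real \<Rightarrow> 'A"
    and T Tinv :: "real \<Rightarrow> nat \<Rightarrow> nat \<Rightarrow> 'A"
    and B :: "real \<Rightarrow> nat \<Rightarrow> nat \<Rightarrow> complex"
  assumes N1: "N \<ge> 1"
    and un: "unitary_R N R"
    and scal: "scalars sc"
    and dlt: "delta_like dl"
    and haa: "rel_aa N (\<lambda>x y i j p q. sc (R x y i j p q)) a"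
    and hdd: "rel_dd N (\<lambda>x y i j p q. sc (R x y i j p q)) ad"
    and had: "rel_ad N (\<lambda>x y i j p q. sc (R x y i j p q)) a ad (\<lambda>k1 k2 i j. dl (k1 - k2) * kd i j)"
    and wb: "well_bred N (\<lambda>x y i j p q. sc (R x y i j p q)) a ad T"
    and inv: "is_inverse N T Tinv"
    and rB: "refl_eq N R B"
    and iB: "inv_pair N B"
begin

abbreviation M (infixl "\<odot>" 70) where "X \<odot> Y \<equiv> mul2 N X Y"
abbreviation I where "I \<equiv> (I2 N :: nat\<Rightarrow>nat\<Rightarrow>nat\<Rightarrow>nat\<Rightarrow>'A)"

definition scm :: "(nat\<Rightarrow>nat\<Rightarrow>nat\<Rightarrow>nat\<Rightarrow>complex) \<Rightarrow> (nat\<Rightarrow>nat\<Rightarrow>nat\<Rightarrow>nat\<Rightarrow>'A)" where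
  "scm X = (\<lambda>i j p q. sc (X i j p q))"
definition S where "S x y = tr N (scm (R x y))"
definition F where "F x y = fl (S x y)"
definition Sb where "Sb x = (\<lambda>i j. sc (B x i j))"
definition ca where "ca x = (\<lambda>i p. if p = 0 then a i x else 0)"
definition ra where "ra x = (\<lambda>p j. if p = 0 then ad j x else 0)"
definition bb where "bb x = bmat N sc T Tinv B x"
definition Dl :: "nat\<Rightarrow>nat\<Rightarrow>nat\<Rightarrow>nat\<Rightarrow>'A" where "Dl = tr N (\<lambda>i j p q. if j = 0 \<and> p = 0 then kd i q else 0)"

lemma sc0[simp]: "sc 0 = 0"
proof -
  have "sc (0 + 0) = sc 0 + sc 0" using scal unfolding scalars_def by blast
  then show ?thesis by simp
qed
lemma sc1[simp]: "sc 1 = 1" using scal unfolding scalars_def by blast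
lemma sc_add: "sc (x + y) = sc x + sc y" using scal unfolding scalars_def by blast
lemma sc_mult: "sc (x * y) = sc x * sc y" using scal unfolding scalars_def by blast
lemma sc_central: "central (sc c)" using scal unfolding scalars_def central_def by blast
lemma sc_comm: "sc c * y = y * sc c" using scal unfolding scalars_def by blast
lemma sc_sum: "sc (\<Sum>x\<in>A. f x) = (\<Sum>x\<in>A. sc (f x))"
  by (induction A rule: infinite_finite_induct) (auto simp: sc_add)
lemma sc_kd[simp]: "sc (kd i j) = kd i j" by (simp add: kd_def)
lemma dl_central: "central (dl x)" using dlt unfolding delta_like_def central_def by blast
lemma dl_zero: "x \<noteq> 0 \<Longrightarrow> dl x = 0" using dlt unfolding delta_like_def by blast
lemma dl_even: "dl (-x) = dl x" using dlt unfolding delta_like_def by blast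

lemma scm_mul2: "scm (mul2 N X Y) = scm X \<odot> scm Y"
  unfolding scm_def mul2_def by (simp add: sc_sum sc_mult)

lemma okk_S[simp]: "okk N (S x y)" unfolding S_def by simp
lemma okk_F[simp]: "okk N (F x y)" unfolding F_def by simp
lemma okk_Dl[simp]: "okk N Dl" unfolding Dl_def by simp
lemma fl_S[simp]: "fl (S x y) = F x y" unfolding F_def ..
lemma fl_F[simp]: "fl (F x y) = S x y" unfolding F_def by (rule fl_fl)

lemma tr_scm_op21: "tr N (scm (op21 R x y)) = F x y"
  unfolding F_def S_def fl_def tr_def scm_def op21_def by (intro ext) auto

lemma U1: "S x y \<odot> F y x = I"
proof -
  have "eq2 N (mul2 N (R x y) (op21 R y x)) id2" using un unfolding unitary_R_def by blast
  then have "tr N (mul2 N (R x y) (op21 R y x)) = tr N id2" by (rule eq2_tr)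
  then have "scm (tr N (mul2 N (R x y) (op21 R y x))) = scm (tr N id2)" by simp
  moreover have "scm (tr N Z) = tr N (scm Z)" for Z unfolding scm_def tr_def by (intro ext) simp
  moreover have "scm id2 = id2" unfolding scm_def id2_def by (intro ext) (simp add: kd_def)
  ultimately have "tr N (scm (mul2 N (R x y) (op21 R y x))) = I2 N" by (simp add: I2_def)
  then show ?thesis by (simp add: scm_mul2 tr_mul2 tr_scm_op21 S_def)
qed

lemma U2: "F x y \<odot> S y x = I"
  using arg_cong[OF U1[of x y], of fl] by (simp add: fl_mul2)


abbreviation A where "A x \<equiv> o1 N (ca x)"
abbreviation A2 where "A2 x \<equiv> o2 N (ca x)"
abbreviation D where "D x \<equiv> o1 N (ra x)"
abbreviation D2 where "D2 x \<equiv> o2 N (ra x)"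
abbreviation T1 where "T1 x \<equiv> o1 N (T x)"
abbreviation T2 where "T2 x \<equiv> o2 N (T x)"
abbreviation Ti1 where "Ti1 x \<equiv> o1 N (Tinv x)"
abbreviation Ti2 where "Ti2 x \<equiv> o2 N (Tinv x)"
abbreviation B1 where "B1 x \<equiv> o1 N (Sb x)"
abbreviation B2 where "B2 x \<equiv> o2 N (Sb x)"
abbreviation b1 where "b1 x \<equiv> o1 N (bb x)"
abbreviation b2 where "b2 x \<equiv> o2 N (bb x)"

lemma S_tr: "S x y = tr N (\<lambda>i j p q. sc (R x y i j p q))" unfolding S_def scm_def ..
lemma F_tr: "F x y = tr N (\<lambda>i j p q. sc (R x y j i q p))"
  unfolding F_def S_def scm_def fl_def tr_def by (intro ext) auto

lemma H_RA: "A x \<odot> A2 y = F y x \<odot> (A2 y \<odot> A x)"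
proof (intro ext)
  fix i j p q
  show "(A x \<odot> A2 y) i j p q = (F y x \<odot> (A2 y \<odot> A x)) i j p q"
  proof (cases "i<N \<and> j<N \<and> p = 0 \<and> q = 0")
    case True
    then show ?thesis using haa[unfolded rel_aa_def, rule_format, of i j x y] N1
      by (simp add: o1_o2_entry o2_o1_entry E_trL F_tr ca_def mult.assoc)
  next
    case False
    then show ?thesis by (auto simp: o1_o2_entry o2_o1_entry E_trL F_tr ca_def)
  qed
qed

lemma H_RD: "D x \<odot> D2 y = D2 y \<odot> (D x \<odot> F y x)"
proof (intro ext)
  fix i j p q
  show "(D x \<odot> D2 y) i j p q = (D2 y \<odot> (D x \<odot> F y x)) i j p q"
  proof (cases "i=0 \<and> j=0 \<and> p <N \<and> q <N")
    case True
    have "(\<Sum>s<N. ad s y * (\<Sum>r<N. ad r x * sc (R y x s r q p)))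
        = (\<Sum>s<N. \<Sum>r<N. ad s y * ad r x * sc (R y x s r q p))"
      by (simp add: sum_distrib_left mult.assoc)
    also have "\<dots> = (\<Sum>r<N. \<Sum>s<N. ad s y * ad r x * sc (R y x s r q p))" by (rule sum.swap)
    finally show ?thesis using True hdd[unfolded rel_dd_def, rule_format, of p q x y] N1
      unfolding o1_o2_entry by (simp add: E_o1L E_o2L F_tr ra_def tr_def)
  next
    case False
    then show ?thesis unfolding o1_o2_entry by (auto simp: E_o1L E_o2L F_tr ra_def tr_def)
  qed
qed

lemma H_RAD: "A x \<odot> D2 y = padd (D2 y \<odot> (S x y \<odot> A x)) (cm (dl (x-y)) Dl)"
proof (intro ext)
  fix i j p q
  show "(A x \<odot> D2 y) i j p q = padd (D2 y \<odot> (S x y \<odot> A x)) (cm (dl (x-y)) Dl) i j p q"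
  proof (cases "i<N \<and> j=0 \<and> p=0 \<and> q <N")
    case True
    have "(\<Sum>s<N. ad s y * (\<Sum>r<N. sc (R x y i s r q) * a r x))
        = (\<Sum>s<N. \<Sum>r<N. ad s y * sc (R x y i s r q) * a r x)"
      by (simp add: sum_distrib_left mult.assoc)
    also have "\<dots> = (\<Sum>r<N. \<Sum>s<N. ad s y * sc (R x y i s r q) * a r x)" by (rule sum.swap)
    finally show ?thesis using True had[unfolded rel_ad_def, rule_format, of i q x y] N1
      by (simp add: o1_o2_entry E_o1R E_o2L S_tr ca_def ra_def tr_def padd_def cm_def Dl_def)
  next
    case False
    then show ?thesis by (auto simp: o1_o2_entry E_o1R E_o2L S_tr ca_def ra_def tr_def padd_def cm_def Dl_def)
  qed
qed

lemma H_TA: "T1 x \<odot> A2 y = F y x \<odot> (A2 y \<odot> T1 x)"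
proof (intro ext)
  fix i j p q
  show "(T1 x \<odot> A2 y) i j p q = (F y x \<odot> (A2 y \<odot> T1 x)) i j p q"
  proof (cases "i<N \<and> j<N \<and> p<N \<and> q = 0")
    case True
    then show ?thesis using wb[unfolded well_bred_def] N1
      by (simp add: o1_o2_entry o2_o1_entry E_trL F_tr ca_def mult.assoc)
  next
    case False
    then show ?thesis by (auto simp: o1_o2_entry o2_o1_entry E_trL F_tr ca_def)
  qed
qed

lemma H_TD: "T1 x \<odot> D2 y = D2 y \<odot> (S x y \<odot> T1 x)"
proof (intro ext)
  fix i j p q
  show "(T1 x \<odot> D2 y) i j p q = (D2 y \<odot> (S x y \<odot> T1 x)) i j p q"
  proof (cases "i<N \<and> j=0 \<and> p<N \<and> q <N")
    case True
    have "(\<Sum>s<N. ad s y * (\<Sum>r<N. sc (R x y i s r q) * T x r p))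
        = (\<Sum>s<N. \<Sum>r<N. ad s y * sc (R x y i s r q) * T x r p)"
      by (simp add: sum_distrib_left mult.assoc)
    also have "\<dots> = (\<Sum>r<N. \<Sum>s<N. ad s y * sc (R x y i s r q) * T x r p)" by (rule sum.swap)
    finally show ?thesis using True wb[unfolded well_bred_def] N1
      by (simp add: o1_o2_entry E_o1R E_o2L S_tr ra_def tr_def)
  next
    case False
    then show ?thesis by (auto simp: o1_o2_entry E_o1R E_o2L S_tr ra_def tr_def)
  qed
qed


lemma scm_tr: "scm (tr N Z) = tr N (scm Z)" unfolding scm_def tr_def by (intro ext) simp
lemma tr_scm_R: "tr N (scm (R x y)) = S x y" unfolding S_def ..
lemma tr_scm_op1: "tr N (scm (op_1 (B x))) = B1 x"
  unfolding o1_def scm_def op_1_def Sb_def by (rule arg_cong[where f="tr N"]) (intro ext, simp)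
lemma tr_scm_op2: "tr N (scm (op_2 (B x))) = B2 x"
  unfolding o2_def scm_def op_2_def Sb_def by (rule arg_cong[where f="tr N"]) (intro ext, simp)

lemma H_TT: "S x y \<odot> (T1 x \<odot> T2 y) = T2 y \<odot> (T1 x \<odot> S x y)"
proof -
  have "eq2 N (mul2 N (scm (R x y)) (mul2 N (op_1 (T x)) (op_2 (T y))))
                  (mul2 N (mul2 N (op_2 (T y)) (op_1 (T x))) (scm (R x y)))"
    using wb unfolding well_bred_def scm_def by blast
  then have "tr N (mul2 N (scm (R x y)) (mul2 N (op_1 (T x)) (op_2 (T y))))
           = tr N (mul2 N (mul2 N (op_2 (T y)) (op_1 (T x))) (scm (R x y)))" by (rule eq2_tr)
  then show ?thesis by (simp add: tr_mul2 tr_scm_R o1_def[symmetric] o2_def[symmetric] mul2_assoc)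
qed

lemma H_inv1: "T1 x \<odot> Ti1 x = I"
  using inv unfolding is_inverse_def by (simp add: o1_mul mm1_def o1_kd)
lemma H_inv2: "Ti1 x \<odot> T1 x = I"
  using inv unfolding is_inverse_def by (simp add: o1_mul mm1_def o1_kd)
lemma H_inv1': "T2 x \<odot> Ti2 x = I"
  using inv unfolding is_inverse_def by (simp add: o2_mul mm1_def o2_kd)
lemma H_inv2': "Ti2 x \<odot> T2 x = I"
  using inv unfolding is_inverse_def by (simp add: o2_mul mm1_def o2_kd)

lemma H_Binv: "B1 x \<odot> B1 (-x) = I"
proof -
  have "(\<Sum>p<N. Sb x i p * Sb (-x) p j) = kd i j" if "i<N" "j<N" for i j
  proof -
    have "(\<Sum>p<N. Sb x i p * Sb (-x) p j) = sc (\<Sum>p<N. B x i p * B (-x) p j)"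
      by (simp add: Sb_def sc_sum sc_mult)
    also have "\<dots> = kd i j" using iB that unfolding inv_pair_def by simp
    finally show ?thesis .
  qed
  then show ?thesis by (simp add: o1_mul mm1_def o1_kd)
qed

lemma H_B: "S x y \<odot> (B1 x \<odot> (F y (-x) \<odot> B2 y)) = B2 y \<odot> (S x (-y) \<odot> (B1 x \<odot> F (-y) (-x)))"
proof -
  have "eq2 N (mul2 N (mul2 N (mul2 N (R x y) (op_1 (B x))) (op21 R y (-x))) (op_2 (B y)))
           (mul2 N (mul2 N (mul2 N (op_2 (B y)) (R x (-y))) (op_1 (B x))) (op21 R (-y) (-x)))"
    using rB unfolding refl_eq_def by blast
  then have "tr N (mul2 N (mul2 N (mul2 N (R x y) (op_1 (B x))) (op21 R y (-x))) (op_2 (B y)))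
           = tr N (mul2 N (mul2 N (mul2 N (op_2 (B y)) (R x (-y))) (op_1 (B x))) (op21 R (-y) (-x)))"
    by (rule eq2_tr)
  then have "scm (tr N (mul2 N (mul2 N (mul2 N (R x y) (op_1 (B x))) (op21 R y (-x))) (op_2 (B y))))
           = scm (tr N (mul2 N (mul2 N (mul2 N (op_2 (B y)) (R x (-y))) (op_1 (B x))) (op21 R (-y) (-x))))"
    by simp
  then show ?thesis
    by (simp add: scm_tr scm_mul2 tr_mul2 tr_scm_R tr_scm_op1 tr_scm_op2 tr_scm_op21 mul2_assoc)
qed

lemma bb_mm: "bb x = mm1 N (T x) (mm1 N (Sb x) (Tinv (-x)))"
  unfolding bb_def bmat_def mm1_def Sb_def by (intro ext) (simp add: sum_distrib_left mult.assoc)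

lemma b1_eq: "b1 x = T1 x \<odot> (B1 x \<odot> Ti1 (-x))"
  by (simp add: o1_mul bb_mm)
lemma b2_eq: "b2 x = T2 x \<odot> (B2 x \<odot> Ti2 (-x))"
  by (simp add: o2_mul bb_mm)

lemma B1_comm: "B1 x \<odot> o2 N Y = o2 N Y \<odot> B1 x"
  by (rule o1_o2_comm) (simp add: Sb_def sc_comm)
lemma B2_comm: "o1 N Y \<odot> B2 x = B2 x \<odot> o1 N Y"
  by (rule o1_o2_comm) (simp add: Sb_def sc_comm)


lemmas okkz = okks okk_S okk_F okk_Dl

lemma U1_t: "okk N W \<Longrightarrow> S x y \<odot> (F y x \<odot> W) = W" by (rule tlI[OF U1])
lemma U2_t: "okk N W \<Longrightarrow> F x y \<odot> (S y x \<odot> W) = W" by (rule tlI[OF U2])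
lemma inv1_t: "okk N W \<Longrightarrow> T1 x \<odot> (Ti1 x \<odot> W) = W" by (rule tlI[OF H_inv1])
lemma inv2_t: "okk N W \<Longrightarrow> Ti1 x \<odot> (T1 x \<odot> W) = W" by (rule tlI[OF H_inv2])
lemma inv1'_t: "okk N W \<Longrightarrow> T2 x \<odot> (Ti2 x \<odot> W) = W" by (rule tlI[OF H_inv1'])
lemma inv2'_t: "okk N W \<Longrightarrow> Ti2 x \<odot> (T2 x \<odot> W) = W" by (rule tlI[OF H_inv2'])
lemmas B1_comm_t = B1_comm[THEN tl2]
lemmas B2_comm_t = B2_comm[THEN tl2]

lemma TAf: "T2 y \<odot> A x = S x y \<odot> (A x \<odot> T2 y)"
  using arg_cong[OF H_TA[of y x], of fl] by (simp add: fl_mul2)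
lemmas TAf_t = TAf[THEN tl2]
lemmas H_TD_t = H_TD[THEN tl2]
lemma TTf: "F x y \<odot> (T2 x \<odot> T1 y) = T1 y \<odot> (T2 x \<odot> F x y)"
  using arg_cong[OF H_TT[of x y], of fl] by (simp add: fl_mul2)
lemma TTf_t: "F x y \<odot> (T2 x \<odot> (T1 y \<odot> W)) = T1 y \<odot> (T2 x \<odot> (F x y \<odot> W))"
  using TTf[THEN tl2, where W=W] by (simp add: mul2_assoc)
lemma H_TT_t: "S x y \<odot> (T1 x \<odot> (T2 y \<odot> W)) = T2 y \<odot> (T1 x \<odot> (S x y \<odot> W))"
  using H_TT[THEN tl2, where W=W] by (simp add: mul2_assoc)

lemma D1: "A x \<odot> T2 y = F y x \<odot> (T2 y \<odot> A x)"
proof -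
  have "F y x \<odot> (T2 y \<odot> A x) = F y x \<odot> (S x y \<odot> (A x \<odot> T2 y))" by (simp only: TAf)
  also have "\<dots> = A x \<odot> T2 y" by (simp add: U2_t okkz)
  finally show ?thesis ..
qed
lemmas D1_t = D1[THEN tl2]

lemma D2: "A x \<odot> Ti2 y = Ti2 y \<odot> (S x y \<odot> A x)"
proof -
  have "Ti2 y \<odot> (S x y \<odot> A x) = Ti2 y \<odot> (S x y \<odot> (A x \<odot> (T2 y \<odot> Ti2 y)))"
    by (simp add: H_inv1' I2_right)
  also have "\<dots> = Ti2 y \<odot> (T2 y \<odot> (A x \<odot> Ti2 y))" by (simp only: mul2_assoc TAf_t)
  also have "\<dots> = A x \<odot> Ti2 y" by (simp add: inv2'_t okkz)
  finally show ?thesis ..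
qed

lemma D3: "A x \<odot> b2 y = F y x \<odot> (b2 y \<odot> (S x (-y) \<odot> A x))"
proof -
  have "A x \<odot> b2 y = A x \<odot> (T2 y \<odot> (B2 y \<odot> Ti2 (-y)))" by (simp only: b2_eq)
  also have "\<dots> = F y x \<odot> (T2 y \<odot> (A x \<odot> (B2 y \<odot> Ti2 (-y))))" by (simp only: D1_t mul2_assoc)
  also have "\<dots> = F y x \<odot> (T2 y \<odot> (B2 y \<odot> (A x \<odot> Ti2 (-y))))" by (simp only: B2_comm_t mul2_assoc)
  also have "\<dots> = F y x \<odot> (T2 y \<odot> (B2 y \<odot> (Ti2 (-y) \<odot> (S x (-y) \<odot> A x))))" by (simp only: D2)
  also have "\<dots> = F y x \<odot> (b2 y \<odot> (S x (-y) \<odot> A x))" by (simp only: b2_eq mul2_assoc)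
  finally show ?thesis .
qed

lemma D4: "Ti1 x \<odot> D2 y = D2 y \<odot> (Ti1 x \<odot> F y x)"
proof -
  have "D2 y \<odot> (Ti1 x \<odot> F y x) = Ti1 x \<odot> (T1 x \<odot> (D2 y \<odot> (Ti1 x \<odot> F y x)))" by (simp add: inv2_t okkz)
  also have "\<dots> = Ti1 x \<odot> (D2 y \<odot> (S x y \<odot> (T1 x \<odot> (Ti1 x \<odot> F y x))))" by (simp only: H_TD_t mul2_assoc)
  also have "\<dots> = Ti1 x \<odot> D2 y" by (simp add: inv1_t U1 I2_right okkz)
  finally show ?thesis ..
qed
lemmas D4_t = D4[THEN tl2]

lemma D5: "b1 x \<odot> D2 y = D2 y \<odot> (S x y \<odot> (b1 x \<odot> F y (-x)))"
proof -
  have "b1 x \<odot> D2 y = T1 x \<odot> (B1 x \<odot> (Ti1 (-x) \<odot> D2 y))" by (simp only: b1_eq mul2_assoc)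
  also have "\<dots> = T1 x \<odot> (B1 x \<odot> (D2 y \<odot> (Ti1 (-x) \<odot> F y (-x))))" by (simp only: D4)
  also have "\<dots> = T1 x \<odot> (D2 y \<odot> (B1 x \<odot> (Ti1 (-x) \<odot> F y (-x))))" by (simp only: B1_comm_t mul2_assoc)
  also have "\<dots> = D2 y \<odot> (S x y \<odot> (T1 x \<odot> (B1 x \<odot> (Ti1 (-x) \<odot> F y (-x)))))" by (simp only: H_TD_t mul2_assoc)
  also have "\<dots> = D2 y \<odot> (S x y \<odot> (b1 x \<odot> F y (-x)))" by (simp only: b1_eq mul2_assoc)
  finally show ?thesis .
qed


lemma D6i: "Ti1 u \<odot> (F y u \<odot> T2 y) = T2 y \<odot> (F y u \<odot> Ti1 u)"
proof -
  have "T2 y \<odot> (F y u \<odot> Ti1 u) = Ti1 u \<odot> (T1 u \<odot> (T2 y \<odot> (F y u \<odot> Ti1 u)))" by (simp add: inv2_t okkz)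
  also have "\<dots> = Ti1 u \<odot> (F y u \<odot> (T2 y \<odot> (T1 u \<odot> Ti1 u)))" by (simp only: TTf_t mul2_assoc)
  also have "\<dots> = Ti1 u \<odot> (F y u \<odot> T2 y)" by (simp add: H_inv1 I2_right okkz)
  finally show ?thesis ..
qed
lemma D6i_t: "Ti1 u \<odot> (F y u \<odot> (T2 y \<odot> W)) = T2 y \<odot> (F y u \<odot> (Ti1 u \<odot> W))"
  using D6i[THEN tl2, where W=W] by (simp add: mul2_assoc)

lemma D6ii: "F v u \<odot> (Ti1 u \<odot> Ti2 v) = Ti2 v \<odot> (Ti1 u \<odot> F v u)"
proof -
  have "Ti2 v \<odot> (Ti1 u \<odot> F v u) = Ti2 v \<odot> (Ti1 u \<odot> (F v u \<odot> (T2 v \<odot> (T1 u \<odot> (Ti1 u \<odot> Ti2 v)))))"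
    by (simp add: inv1_t H_inv1' I2_right okkz)
  also have "\<dots> = Ti2 v \<odot> (Ti1 u \<odot> (T1 u \<odot> (T2 v \<odot> (F v u \<odot> (Ti1 u \<odot> Ti2 v)))))"
    by (simp only: TTf_t mul2_assoc)
  also have "\<dots> = F v u \<odot> (Ti1 u \<odot> Ti2 v)" by (simp add: inv2_t inv2'_t okkz)
  finally show ?thesis ..
qed
lemma D6ii_t: "F v u \<odot> (Ti1 u \<odot> (Ti2 v \<odot> W)) = Ti2 v \<odot> (Ti1 u \<odot> (F v u \<odot> W))"
  using D6ii[THEN tl2, where W=W] by (simp add: mul2_assoc)

lemma D6iii: "T1 x \<odot> (S x v \<odot> Ti2 v) = Ti2 v \<odot> (S x v \<odot> T1 x)"
proof -
  have "Ti2 v \<odot> (S x v \<odot> T1 x) = Ti2 v \<odot> (S x v \<odot> (T1 x \<odot> (T2 v \<odot> Ti2 v)))"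
    by (simp add: H_inv1' I2_right okkz)
  also have "\<dots> = Ti2 v \<odot> (T2 v \<odot> (T1 x \<odot> (S x v \<odot> Ti2 v)))" by (simp only: H_TT_t mul2_assoc)
  also have "\<dots> = T1 x \<odot> (S x v \<odot> Ti2 v)" by (simp add: inv2'_t okkz)
  finally show ?thesis ..
qed
lemma D6iii_t: "T1 x \<odot> (S x v \<odot> (Ti2 v \<odot> W)) = Ti2 v \<odot> (S x v \<odot> (T1 x \<odot> W))"
  using D6iii[THEN tl2, where W=W] by (simp add: mul2_assoc)

lemma H_B_t: "S x y \<odot> (B1 x \<odot> (F y (-x) \<odot> (B2 y \<odot> W))) = B2 y \<odot> (S x (-y) \<odot> (B1 x \<odot> (F (-y) (-x) \<odot> W)))"
  using H_B[THEN tl2, where W=W] by (simp add: mul2_assoc)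

lemma D7: "S x y \<odot> (b1 x \<odot> (F y (-x) \<odot> b2 y)) = b2 y \<odot> (S x (-y) \<odot> (b1 x \<odot> F (-y) (-x)))"
proof -
  have "S x y \<odot> (b1 x \<odot> (F y (-x) \<odot> b2 y))
      = S x y \<odot> (T1 x \<odot> (B1 x \<odot> (Ti1 (-x) \<odot> (F y (-x) \<odot> (T2 y \<odot> (B2 y \<odot> Ti2 (-y)))))))"
    by (simp only: b1_eq b2_eq mul2_assoc)
  also have "\<dots> = S x y \<odot> (T1 x \<odot> (B1 x \<odot> (T2 y \<odot> (F y (-x) \<odot> (Ti1 (-x) \<odot> (B2 y \<odot> Ti2 (-y)))))))"
    by (simp only: D6i_t)
  also have "\<dots> = S x y \<odot> (T1 x \<odot> (B1 x \<odot> (T2 y \<odot> (F y (-x) \<odot> (B2 y \<odot> (Ti1 (-x) \<odot> Ti2 (-y)))))))"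
    by (simp only: B2_comm[of "Tinv (-x)" y, THEN tl2] mul2_assoc)
  also have "\<dots> = S x y \<odot> (T1 x \<odot> (T2 y \<odot> (B1 x \<odot> (F y (-x) \<odot> (B2 y \<odot> (Ti1 (-x) \<odot> Ti2 (-y)))))))"
    by (simp only: B1_comm[of x "T y", THEN tl2] mul2_assoc)
  also have "\<dots> = T2 y \<odot> (T1 x \<odot> (S x y \<odot> (B1 x \<odot> (F y (-x) \<odot> (B2 y \<odot> (Ti1 (-x) \<odot> Ti2 (-y)))))))"
    by (simp only: H_TT_t)
  also have "\<dots> = T2 y \<odot> (T1 x \<odot> (B2 y \<odot> (S x (-y) \<odot> (B1 x \<odot> (F (-y) (-x) \<odot> (Ti1 (-x) \<odot> Ti2 (-y)))))))"
    by (simp only: H_B_t)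
  also have "\<dots> = T2 y \<odot> (T1 x \<odot> (B2 y \<odot> (S x (-y) \<odot> (B1 x \<odot> (Ti2 (-y) \<odot> (Ti1 (-x) \<odot> F (-y) (-x)))))))"
    by (simp only: D6ii)
  also have "\<dots> = T2 y \<odot> (B2 y \<odot> (T1 x \<odot> (S x (-y) \<odot> (B1 x \<odot> (Ti2 (-y) \<odot> (Ti1 (-x) \<odot> F (-y) (-x)))))))"
    by (simp only: B2_comm[of "T x" y, THEN tl2] mul2_assoc)
  also have "\<dots> = T2 y \<odot> (B2 y \<odot> (T1 x \<odot> (S x (-y) \<odot> (Ti2 (-y) \<odot> (B1 x \<odot> (Ti1 (-x) \<odot> F (-y) (-x)))))))"
    by (simp only: B1_comm[of x "Tinv (-y)", THEN tl2] mul2_assoc)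
  also have "\<dots> = T2 y \<odot> (B2 y \<odot> (Ti2 (-y) \<odot> (S x (-y) \<odot> (T1 x \<odot> (B1 x \<odot> (Ti1 (-x) \<odot> F (-y) (-x)))))))"
    by (simp only: D6iii_t)
  also have "\<dots> = b2 y \<odot> (S x (-y) \<odot> (b1 x \<odot> F (-y) (-x)))"
    by (simp only: b1_eq b2_eq mul2_assoc)
  finally show ?thesis .
qed

lemma D7': "b1 x \<odot> (F y (-x) \<odot> b2 y) = F y x \<odot> (b2 y \<odot> (S x (-y) \<odot> (b1 x \<odot> F (-y) (-x))))"
proof -
  have "F y x \<odot> (b2 y \<odot> (S x (-y) \<odot> (b1 x \<odot> F (-y) (-x)))) = F y x \<odot> (S x y \<odot> (b1 x \<odot> (F y (-x) \<odot> b2 y)))"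
    by (simp only: D7)
  also have "\<dots> = b1 x \<odot> (F y (-x) \<odot> b2 y)" by (simp add: U2_t okkz)
  finally show ?thesis ..
qed

lemma D8: "b1 x \<odot> b1 (-x) = I"
proof -
  have "b1 x \<odot> b1 (-x) = T1 x \<odot> (B1 x \<odot> (Ti1 (-x) \<odot> (T1 (-x) \<odot> (B1 (-x) \<odot> Ti1 x))))"
    by (simp add: b1_eq mul2_assoc)
  also have "\<dots> = T1 x \<odot> (B1 x \<odot> (B1 (-x) \<odot> Ti1 x))" by (simp add: inv2_t okkz)
  also have "\<dots> = I" by (simp add: H_Binv[THEN tl2, simplified mul2_assoc] H_Binv I2_left H_inv1 okkz
        flip: mul2_assoc)
  finally show ?thesis .
qed

lemma D9: "A2 x \<odot> b1 y = S y x \<odot> (b1 y \<odot> (F x (-y) \<odot> A2 x))"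
  using arg_cong[OF D3[of x y], of fl] by (simp add: fl_mul2)
lemma D10: "b2 x \<odot> D y = D y \<odot> (F x y \<odot> (b2 x \<odot> S y (-x)))"
  using arg_cong[OF D5[of x y], of fl] by (simp add: fl_mul2)


lemmas D3_t = D3[THEN tl2]
lemmas D5_t = D5[THEN tl2]
lemma D7_t: "S x y \<odot> (b1 x \<odot> (F y (-x) \<odot> (b2 y \<odot> W))) = b2 y \<odot> (S x (-y) \<odot> (b1 x \<odot> (F (-y) (-x) \<odot> W)))"
  using D7[THEN tl2, where W=W] by (simp add: mul2_assoc)
lemma D7'_t: "b1 x \<odot> (F y (-x) \<odot> (b2 y \<odot> W)) = F y x \<odot> (b2 y \<odot> (S x (-y) \<odot> (b1 x \<odot> (F (-y) (-x) \<odot> W))))"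
  using D7'[THEN tl2, where W=W] by (simp add: mul2_assoc)
lemmas D9_t = D9[THEN tl2]
lemmas D10_t = D10[THEN tl2]
lemmas H_RA_t = H_RA[THEN tl2]
lemmas H_RD_t = H_RD[THEN tl2]

lemma t2: "A x \<odot> (b2 y \<odot> A2 (-y)) = F y x \<odot> (b2 y \<odot> (A2 (-y) \<odot> A x))"
proof -
  have "A x \<odot> (b2 y \<odot> A2 (-y)) = F y x \<odot> (b2 y \<odot> (S x (-y) \<odot> (A x \<odot> A2 (-y))))"
    by (simp only: D3_t mul2_assoc)
  also have "\<dots> = F y x \<odot> (b2 y \<odot> (S x (-y) \<odot> (F (-y) x \<odot> (A2 (-y) \<odot> A x))))" by (simp only: H_RA)
  also have "\<dots> = F y x \<odot> (b2 y \<odot> (A2 (-y) \<odot> A x))" by (simp add: U1_t okkz)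
  finally show ?thesis .
qed

lemma t3: "b1 x \<odot> (A (-x) \<odot> A2 y) = F y x \<odot> (A2 y \<odot> (b1 x \<odot> A (-x)))"
proof -
  have "F y x \<odot> (A2 y \<odot> (b1 x \<odot> A (-x))) = F y x \<odot> (S x y \<odot> (b1 x \<odot> (F y (-x) \<odot> (A2 y \<odot> A (-x)))))"
    by (simp only: D9_t mul2_assoc)
  also have "\<dots> = b1 x \<odot> (F y (-x) \<odot> (A2 y \<odot> A (-x)))" by (simp add: U2_t okkz)
  also have "\<dots> = b1 x \<odot> (A (-x) \<odot> A2 y)" by (simp only: H_RA)
  finally show ?thesis ..
qed

lemma t4: "b1 x \<odot> (A (-x) \<odot> (b2 y \<odot> A2 (-y))) = F y x \<odot> (b2 y \<odot> (A2 (-y) \<odot> (b1 x \<odot> A (-x))))"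
proof -
  have "b1 x \<odot> (A (-x) \<odot> (b2 y \<odot> A2 (-y)))
      = b1 x \<odot> (F y (-x) \<odot> (b2 y \<odot> (S (-x) (-y) \<odot> (A (-x) \<odot> A2 (-y)))))"
    by (simp only: D3_t mul2_assoc)
  also have "\<dots> = b1 x \<odot> (F y (-x) \<odot> (b2 y \<odot> (S (-x) (-y) \<odot> (F (-y) (-x) \<odot> (A2 (-y) \<odot> A (-x))))))"
    by (simp only: H_RA)
  also have "\<dots> = b1 x \<odot> (F y (-x) \<odot> (b2 y \<odot> (A2 (-y) \<odot> A (-x))))" by (simp add: U1_t okkz)
  also have "\<dots> = F y x \<odot> (b2 y \<odot> (S x (-y) \<odot> (b1 x \<odot> (F (-y) (-x) \<odot> (A2 (-y) \<odot> A (-x))))))"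
    by (simp only: D7'_t)
  also have "\<dots> = F y x \<odot> (b2 y \<odot> (A2 (-y) \<odot> (b1 x \<odot> A (-x))))"
    by (simp only: D9_t mul2_assoc)
  finally show ?thesis .
qed

lemma s2: "D x \<odot> (D2 (-y) \<odot> b2 (-y)) = D2 (-y) \<odot> (b2 (-y) \<odot> (D x \<odot> F y x))"
proof -
  have "D2 (-y) \<odot> (b2 (-y) \<odot> (D x \<odot> F y x)) = D2 (-y) \<odot> (D x \<odot> (F (-y) x \<odot> (b2 (-y) \<odot> (S x y \<odot> F y x))))"
    by (simp add: D10_t mul2_assoc)
  also have "\<dots> = D2 (-y) \<odot> (D x \<odot> (F (-y) x \<odot> b2 (-y)))" by (simp add: U1 I2_right okkz)
  also have "\<dots> = D x \<odot> (D2 (-y) \<odot> b2 (-y))" by (simp only: H_RD_t mul2_assoc)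
  finally show ?thesis ..
qed

lemma s3: "D (-x) \<odot> (b1 (-x) \<odot> D2 y) = D2 y \<odot> (D (-x) \<odot> (b1 (-x) \<odot> F y x))"
proof -
  have "D (-x) \<odot> (b1 (-x) \<odot> D2 y) = D (-x) \<odot> (D2 y \<odot> (S (-x) y \<odot> (b1 (-x) \<odot> F y x)))"
    by (simp add: D5)
  also have "\<dots> = D2 y \<odot> (D (-x) \<odot> (F y (-x) \<odot> (S (-x) y \<odot> (b1 (-x) \<odot> F y x))))"
    by (simp only: H_RD_t mul2_assoc)
  also have "\<dots> = D2 y \<odot> (D (-x) \<odot> (b1 (-x) \<odot> F y x))" by (simp add: U2_t okkz)
  finally show ?thesis .
qed

lemma s4: "D (-x) \<odot> (b1 (-x) \<odot> (D2 (-y) \<odot> b2 (-y))) = D2 (-y) \<odot> (b2 (-y) \<odot> (D (-x) \<odot> (b1 (-x) \<odot> F y x)))"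
proof -
  have "D (-x) \<odot> (b1 (-x) \<odot> (D2 (-y) \<odot> b2 (-y)))
     = D (-x) \<odot> (D2 (-y) \<odot> (S (-x) (-y) \<odot> (b1 (-x) \<odot> (F (-y) x \<odot> b2 (-y)))))"
    by (simp add: D5_t mul2_assoc)
  also have "\<dots> = D2 (-y) \<odot> (D (-x) \<odot> (F (-y) (-x) \<odot> (S (-x) (-y) \<odot> (b1 (-x) \<odot> (F (-y) x \<odot> b2 (-y))))))"
    by (simp only: H_RD_t mul2_assoc)
  also have "\<dots> = D2 (-y) \<odot> (D (-x) \<odot> (b1 (-x) \<odot> (F (-y) x \<odot> b2 (-y))))" by (simp add: U2_t okkz)
  also have "\<dots> = D2 (-y) \<odot> (D (-x) \<odot> (F (-y) (-x) \<odot> (b2 (-y) \<odot> (S (-x) y \<odot> (b1 (-x) \<odot> F y x)))))"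
    using D7'[of "-x" "-y"] by simp
  also have "\<dots> = D2 (-y) \<odot> (b2 (-y) \<odot> (D (-x) \<odot> (b1 (-x) \<odot> F y x)))"
    by (simp add: D10_t mul2_assoc)
  finally show ?thesis .
qed


lemma Dl_comm: "Dl \<odot> o2 N X = o1 N X \<odot> Dl"
  by (intro ext) (simp add: E_o2R E_o1L Dl_def tr_def ifsimps kd_def)

lemma cm0: "cm 0 X = cm 0 (Y::nat\<Rightarrow>nat\<Rightarrow>nat\<Rightarrow>nat\<Rightarrow>'A)" unfolding cm_def by simp

lemma dl_swap: "cm (dl (x+y)) (b1 (-y) \<odot> Dl) = cm (dl (x+y)) (b1 x \<odot> Dl)"
proof (cases "x + y = 0")
  case True then have "-y = x" by simp
  then show ?thesis by simp
next
  case False then show ?thesis by (simp add: dl_zero cm0)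
qed

lemma dl_inv: "cm (dl (x-y)) (b1 x \<odot> (b1 (-y) \<odot> Dl)) = cm (dl (x-y)) Dl"
proof (cases "x - y = 0")
  case True then have "y = x" by simp
  then show ?thesis by (simp add: D8[THEN tlI] okkz)
next
  case False then show ?thesis by (simp add: dl_zero cm0)
qed

lemma r1: "A x \<odot> D2 y = padd (D2 y \<odot> (S x y \<odot> A x)) (cm (dl (x-y)) Dl)" by (rule H_RAD)

lemma r2: "A x \<odot> (D2 (-y) \<odot> b2 (-y)) = padd (D2 (-y) \<odot> (b2 (-y) \<odot> (S x y \<odot> A x))) (cm (dl (x+y)) (b1 x \<odot> Dl))"
proof -
  have "A x \<odot> (D2 (-y) \<odot> b2 (-y)) = (A x \<odot> D2 (-y)) \<odot> b2 (-y)" by (simp add: mul2_assoc)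
  also have "\<dots> = padd (D2 (-y) \<odot> (S x (-y) \<odot> (A x \<odot> b2 (-y)))) (cm (dl (x+y)) (Dl \<odot> b2 (-y)))"
    by (simp add: H_RAD padd_mul2 cm_mul2 mul2_assoc)
  also have "\<dots> = padd (D2 (-y) \<odot> (S x (-y) \<odot> (F (-y) x \<odot> (b2 (-y) \<odot> (S x y \<odot> A x))))) (cm (dl (x+y)) (b1 (-y) \<odot> Dl))"
    by (simp add: D3 Dl_comm)
  also have "\<dots> = padd (D2 (-y) \<odot> (b2 (-y) \<odot> (S x y \<odot> A x))) (cm (dl (x+y)) (b1 x \<odot> Dl))"
    by (simp add: U1_t okkz dl_swap)
  finally show ?thesis .
qed

lemma r3: "b1 x \<odot> (A (-x) \<odot> D2 y) = padd (D2 y \<odot> (S x y \<odot> (b1 x \<odot> A (-x)))) (cm (dl (x+y)) (b1 x \<odot> Dl))"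
proof -
  have e: "dl (-x-y) = dl (x+y)" using dl_even[of "x+y"] by simp
  have "b1 x \<odot> (A (-x) \<odot> D2 y) = padd (b1 x \<odot> (D2 y \<odot> (S (-x) y \<odot> A (-x)))) (cm (dl (-x-y)) (b1 x \<odot> Dl))"
    by (simp add: H_RAD mul2_padd mul2_cm dl_central)
  also have "\<dots> = padd (D2 y \<odot> (S x y \<odot> (b1 x \<odot> (F y (-x) \<odot> (S (-x) y \<odot> A (-x)))))) (cm (dl (x+y)) (b1 x \<odot> Dl))"
    by (simp only: D5_t mul2_assoc e)
  also have "\<dots> = padd (D2 y \<odot> (S x y \<odot> (b1 x \<odot> A (-x)))) (cm (dl (x+y)) (b1 x \<odot> Dl))"
    by (simp add: U2_t okkz)
  finally show ?thesis .
qed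

lemma r4: "b1 x \<odot> (A (-x) \<odot> (D2 (-y) \<odot> b2 (-y))) = padd (D2 (-y) \<odot> (b2 (-y) \<odot> (S x y \<odot> (b1 x \<odot> A (-x))))) (cm (dl (x-y)) Dl)"
proof -
  have e: "dl (-x - -y) = dl (x-y)" using dl_even[of "x-y"] by simp
  have "b1 x \<odot> (A (-x) \<odot> (D2 (-y) \<odot> b2 (-y))) = b1 x \<odot> ((A (-x) \<odot> D2 (-y)) \<odot> b2 (-y))" by (simp add: mul2_assoc)
  also have "\<dots> = padd (b1 x \<odot> (D2 (-y) \<odot> (S (-x) (-y) \<odot> (A (-x) \<odot> b2 (-y))))) (cm (dl (x-y)) (b1 x \<odot> (Dl \<odot> b2 (-y))))"
    by (simp only: H_RAD padd_mul2 mul2_padd cm_mul2 mul2_cm[OF dl_central] mul2_assoc e)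
  also have "\<dots> = padd (D2 (-y) \<odot> (S x (-y) \<odot> (b1 x \<odot> (F (-y) (-x) \<odot> (S (-x) (-y) \<odot> (A (-x) \<odot> b2 (-y)))))))
                        (cm (dl (x-y)) (b1 x \<odot> (b1 (-y) \<odot> Dl)))"
    by (simp add: D5_t mul2_assoc Dl_comm)
  also have "\<dots> = padd (D2 (-y) \<odot> (S x (-y) \<odot> (b1 x \<odot> (A (-x) \<odot> b2 (-y))))) (cm (dl (x-y)) Dl)"
    by (simp add: U2_t okkz dl_inv)
  also have "\<dots> = padd (D2 (-y) \<odot> (S x (-y) \<odot> (b1 x \<odot> (F (-y) (-x) \<odot> (b2 (-y) \<odot> (S (-x) y \<odot> A (-x))))))) (cm (dl (x-y)) Dl)"
    by (simp add: D3)
  also have "\<dots> = padd (D2 (-y) \<odot> (b2 (-y) \<odot> (S x y \<odot> (b1 x \<odot> (F y (-x) \<odot> (S (-x) y \<odot> A (-x))))))) (cm (dl (x-y)) Dl)"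
    using D7_t[of x "-y"] by simp
  also have "\<dots> = padd (D2 (-y) \<odot> (b2 (-y) \<odot> (S x y \<odot> (b1 x \<odot> A (-x))))) (cm (dl (x-y)) Dl)"
    by (simp add: U2_t okkz)
  finally show ?thesis .
qed

lemma q2: "b1 x \<odot> (A (-x) \<odot> b2 y) = F y x \<odot> (b2 y \<odot> (S x (-y) \<odot> (b1 x \<odot> A (-x))))"
proof -
  have "b1 x \<odot> (A (-x) \<odot> b2 y) = b1 x \<odot> (F y (-x) \<odot> (b2 y \<odot> (S (-x) (-y) \<odot> A (-x))))" by (simp add: D3)
  also have "\<dots> = F y x \<odot> (b2 y \<odot> (S x (-y) \<odot> (b1 x \<odot> (F (-y) (-x) \<odot> (S (-x) (-y) \<odot> A (-x))))))"
    by (simp only: D7'_t)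
  also have "\<dots> = F y x \<odot> (b2 y \<odot> (S x (-y) \<odot> (b1 x \<odot> A (-x))))" by (simp add: U2_t okkz)
  finally show ?thesis .
qed

lemma p2: "b1 x \<odot> (D2 (-y) \<odot> b2 (-y)) = D2 (-y) \<odot> (b2 (-y) \<odot> (S x y \<odot> (b1 x \<odot> F y (-x))))"
proof -
  have "b1 x \<odot> (D2 (-y) \<odot> b2 (-y)) = D2 (-y) \<odot> (S x (-y) \<odot> (b1 x \<odot> (F (-y) (-x) \<odot> b2 (-y))))"
    by (simp add: D5_t mul2_assoc)
  also have "\<dots> = D2 (-y) \<odot> (b2 (-y) \<odot> (S x y \<odot> (b1 x \<odot> F y (-x))))"
    using D7[of x "-y"] by simp
  finally show ?thesis .
qed


end

context ZF begin
abbreviation h where "h \<equiv> sc (1/2)"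
definition cat where "cat x = (\<lambda>i p. if p = 0 then a_tilde N sc a bb i x else 0)"
definition rat where "rat x = (\<lambda>p j. if p = 0 then ad_tilde N sc ad bb j x else 0)"

lemma ia: "(if P then u else 0) + (if P then v else 0) = (if P then u + v else (0::'A))" by simp
lemma o1_cm: "o1 N (\<lambda>i p. c * Z i p) = cm c (o1 N (Z::nat\<Rightarrow>nat\<Rightarrow>'A))"
  unfolding o1_def tr_def op_1_def cm_def by (intro ext) simp
lemma o2_cm: "o2 N (\<lambda>i p. c * Z i p) = cm c (o2 N (Z::nat\<Rightarrow>nat\<Rightarrow>'A))"
  unfolding o2_def tr_def op_2_def cm_def by (intro ext) simp
lemma o1_padd: "o1 N (\<lambda>i p. X i p + Y i p) = padd (o1 N X) (o1 N (Y::nat\<Rightarrow>nat\<Rightarrow>'A))"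
  unfolding o1_def tr_def op_1_def padd_def by (simp only: ia add_0_left)
lemma o2_padd: "o2 N (\<lambda>i p. X i p + Y i p) = padd (o2 N X) (o2 N (Y::nat\<Rightarrow>nat\<Rightarrow>'A))"
  unfolding o2_def tr_def op_2_def padd_def by (simp only: ia add_0_left)

lemma cat_eq: "cat x = (\<lambda>i p. h * (ca x i p + mm1 N (bb x) (ca (-x)) i p))"
proof (intro ext)
  fix i p show "cat x i p = h * (ca x i p + mm1 N (bb x) (ca (-x)) i p)"
    by (cases "p = 0") (simp_all add: cat_def a_tilde_def ca_def mm1_def)
qed
lemma rat_eq: "rat x = (\<lambda>p j. h * (ra x p j + mm1 N (ra (-x)) (bb (-x)) p j))"
proof (intro ext)
  fix p j show "rat x p j = h * (ra x p j + mm1 N (ra (-x)) (bb (-x)) p j)"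
    by (cases "p = 0") (simp_all add: rat_def ad_tilde_def ra_def mm1_def)
qed

lemma At1: "o1 N (cat x) = cm h (padd (A x) (b1 x \<odot> A (-x)))"
  by (simp only: cat_eq o1_cm o1_padd o1_mul)
lemma At2: "o2 N (cat x) = cm h (padd (A2 x) (b2 x \<odot> A2 (-x)))"
  by (simp only: cat_eq o2_cm o2_padd o2_mul)
lemma Dt1: "o1 N (rat x) = cm h (padd (D x) (D (-x) \<odot> b1 (-x)))"
  by (simp only: rat_eq o1_cm o1_padd o1_mul)
lemma Dt2: "o2 N (rat x) = cm h (padd (D2 x) (D2 (-x) \<odot> b2 (-x)))"
  by (simp only: rat_eq o2_cm o2_padd o2_mul)

lemmas distr = padd_mul2 mul2_padd cm_mul2 mul2_cm[OF sc_central] mul2_assoc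


lemma C4: "o1 N (cat x) \<odot> b2 y = F y x \<odot> (b2 y \<odot> (S x (-y) \<odot> o1 N (cat x)))"
  apply (simp only: At1 distr)
  apply (simp only: D3[of x y] q2[of x y])
  done

lemma C5: "b1 x \<odot> o2 N (rat y) = o2 N (rat y) \<odot> (S x y \<odot> (b1 x \<odot> F y (-x)))"
  apply (simp only: Dt2 distr)
  apply (simp only: D5[of x y] p2[of x y])
  done


lemma padd_swap: "padd (padd p1 p2) (padd p3 p4) = padd (padd p1 p3) (padd p2 (p4::nat\<Rightarrow>nat\<Rightarrow>nat\<Rightarrow>nat\<Rightarrow>'A))"
  unfolding padd_def by (simp add: add_ac)

lemma cm_padd: "padd (cm c X) (cm c Y) = cm c (padd X (Y::nat\<Rightarrow>nat\<Rightarrow>nat\<Rightarrow>nat\<Rightarrow>'A))"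
  unfolding padd_def cm_def by (simp add: distrib_left)

lemma C1: "o1 N (cat x) \<odot> o2 N (cat y) = F y x \<odot> (o2 N (cat y) \<odot> o1 N (cat x))"
  apply (simp only: At1 At2 distr)
  apply (simp only: H_RA[of x y] t2[of x y] t3[of x y] t4[of x y])
  apply (simp only: cm_padd padd_swap)
  done

lemma C2: "o1 N (rat x) \<odot> o2 N (rat y) = o2 N (rat y) \<odot> (o1 N (rat x) \<odot> F y x)"
  apply (simp only: Dt1 Dt2 distr)
  apply (simp only: H_RD[of x y] s2[of x y] s3[of x y] s4[of x y])
  apply (simp only: cm_padd padd_swap)
  done

lemma hq1: "h * (h * z) = sc (1/4) * z"
proof -
  have e: "(1/2::complex) * (1/2) = 1/4" by simp
  have "h * (h * z) = sc (1/2 * (1/2)) * z" by (simp only: sc_mult mult.assoc)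
  then show ?thesis by (simp only: e)
qed
lemma hq2: "h * z = sc (1/4) * z + sc (1/4) * z"
proof -
  have e: "(1/4::complex) + 1/4 = 1/2" by simp
  have "sc (1/4) * z + sc (1/4) * z = sc (1/4 + 1/4) * z" by (simp only: sc_add distrib_right)
  then show ?thesis by (simp only: e)
qed

lemma C3: "o1 N (cat x) \<odot> o2 N (rat y) = padd (o2 N (rat y) \<odot> (S x y \<odot> o1 N (cat x)))
      (cm h (padd (cm (dl (x-y)) Dl) (cm (dl (x+y)) (b1 x \<odot> Dl))))"
  apply (simp only: At1 Dt2 distr)
  apply (simp only: r1[of x y] r2[of x y] r3[of x y] r4[of x y])
  apply (simp only: fun_eq_iff padd_def cm_def distrib_left hq1)
  apply (simp add: hq2 distrib_left add_ac)
  done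

lemma tr_app: "tr N X i j p q = (if i<N \<and> j<N \<and> p<N \<and> q<N then X i j p q else 0)"
  unfolding tr_def by simp

lemma cat0: "cat x i 0 = a_tilde N sc a bb i x" unfolding cat_def by simp
lemma rat0: "rat x 0 j = ad_tilde N sc ad bb j x" unfolding rat_def by simp

lemma X1: "i<N \<Longrightarrow> j<N \<Longrightarrow> a_tilde N sc a bb i x * a_tilde N sc a bb j y
   = (\<Sum>p<N. \<Sum>q<N. sc (R y x j i q p) * a_tilde N sc a bb q y * a_tilde N sc a bb p x)"
  using fun_cong[OF fun_cong[OF fun_cong[OF fun_cong[OF C1[of x y], of i], of j], of 0], of 0] N1
  by (simp add: o1_o2_entry o2_o1_entry E_trL F_tr cat0 mult.assoc)

lemma X2: "i<N \<Longrightarrow> j<N \<Longrightarrow> ad_tilde N sc ad bb i x * ad_tilde N sc ad bb j y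
   = (\<Sum>p<N. \<Sum>q<N. ad_tilde N sc ad bb q y * ad_tilde N sc ad bb p x * sc (R y x q p j i))"
proof -
  assume ij: "i<N" "j<N"
  have "(\<Sum>s<N. ad_tilde N sc ad bb s y * (\<Sum>r<N. ad_tilde N sc ad bb r x * sc (R y x s r j i)))
      = (\<Sum>s<N. \<Sum>r<N. ad_tilde N sc ad bb s y * ad_tilde N sc ad bb r x * sc (R y x s r j i))"
    by (simp add: sum_distrib_left mult.assoc)
  also have "\<dots> = (\<Sum>r<N. \<Sum>s<N. ad_tilde N sc ad bb s y * ad_tilde N sc ad bb r x * sc (R y x s r j i))"
    by (rule sum.swap)
  finally show ?thesis
    using fun_cong[OF fun_cong[OF fun_cong[OF fun_cong[OF C2[of x y], of 0], of 0], of i], of j] N1 ij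
    unfolding o1_o2_entry by (simp add: E_o1L E_o2L F_tr tr_def rat0)
qed


lemma b1Dl: "i<N \<Longrightarrow> j<N \<Longrightarrow> (b1 x \<odot> Dl) i 0 0 j = bb x i j"
  using N1 by (simp add: E_o1L Dl_def tr_def kd_def ifsimps)

lemma X3: "i<N \<Longrightarrow> j<N \<Longrightarrow> a_tilde N sc a bb i x * ad_tilde N sc ad bb j y
   = (\<Sum>p<N. \<Sum>q<N. ad_tilde N sc ad bb q y * sc (R x y i q p j) * a_tilde N sc a bb p x)
     + (sc (1/2) * dl (x - y) * kd i j + sc (1/2) * dl (x + y) * bb x i j)"
proof -
  assume ij: "i<N" "j<N"
  have "(\<Sum>s<N. ad_tilde N sc ad bb s y * (\<Sum>r<N. sc (R x y i s r j) * a_tilde N sc a bb r x))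
      = (\<Sum>s<N. \<Sum>r<N. ad_tilde N sc ad bb s y * sc (R x y i s r j) * a_tilde N sc a bb r x)"
    by (simp add: sum_distrib_left mult.assoc)
  also have "\<dots> = (\<Sum>r<N. \<Sum>s<N. ad_tilde N sc ad bb s y * sc (R x y i s r j) * a_tilde N sc a bb r x)"
    by (rule sum.swap)
  finally have e: "(\<Sum>s<N. ad_tilde N sc ad bb s y * (\<Sum>r<N. sc (R x y i s r j) * a_tilde N sc a bb r x))
      = (\<Sum>r<N. \<Sum>s<N. ad_tilde N sc ad bb s y * sc (R x y i s r j) * a_tilde N sc a bb r x)" .
  have "(o1 N (cat x) \<odot> o2 N (rat y)) i 0 0 j = a_tilde N sc a bb i x * ad_tilde N sc ad bb j y"
    using ij N1 by (simp add: o1_o2_entry cat0 rat0)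
  moreover have "(o2 N (rat y) \<odot> (S x y \<odot> o1 N (cat x))) i 0 0 j
     = (\<Sum>s<N. ad_tilde N sc ad bb s y * (\<Sum>r<N. sc (R x y i s r j) * a_tilde N sc a bb r x))"
    using ij N1 by (simp add: E_o2L E_o1R S_tr tr_def cat0 rat0)
  moreover have "cm h (padd (cm (dl (x-y)) Dl) (cm (dl (x+y)) (b1 x \<odot> Dl))) i 0 0 j
     = sc (1/2) * dl (x - y) * kd i j + sc (1/2) * dl (x + y) * bb x i j"
    using ij N1 b1Dl[OF ij, of x] by (simp add: cm_def padd_def Dl_def tr_def distrib_left mult.assoc)
  ultimately show ?thesis
    using fun_cong[OF fun_cong[OF fun_cong[OF fun_cong[OF C3[of x y], of i], of 0], of 0], of j] e
    by (simp add: padd_def)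
qed

lemma X5: "i<N \<Longrightarrow> j<N \<Longrightarrow> m<N \<Longrightarrow> bb x i m * ad_tilde N sc ad bb j y
   = (\<Sum>q<N. \<Sum>t<N. \<Sum>s<N. \<Sum>r<N. ad_tilde N sc ad bb q y * sc (R x y i q t s) * bb x t r * sc (R y (-x) s r j m))"
proof -
  assume ijm: "i<N" "j<N" "m<N"
  have "(b1 x \<odot> o2 N (rat y)) i 0 m j = bb x i m * ad_tilde N sc ad bb j y"
    using ijm N1 by (simp add: o1_o2_entry rat0)
  moreover have "(o2 N (rat y) \<odot> (S x y \<odot> (b1 x \<odot> F y (-x)))) i 0 m j
    = (\<Sum>q<N. \<Sum>t<N. \<Sum>s<N. \<Sum>r<N. ad_tilde N sc ad bb q y * sc (R x y i q t s) * bb x t r * sc (R y (-x) s r j m))"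
    using ijm N1 by (simp add: E_o2L E_trL S_tr E_o1L F_tr tr_app rat0 sum_distrib_left mult.assoc)
  ultimately show ?thesis
    using fun_cong[OF fun_cong[OF fun_cong[OF fun_cong[OF C5[of x y], of i], of 0], of m], of j]
    by simp
qed


lemma reord: "(\<Sum>r<N. \<Sum>t<N. \<Sum>s<N. \<Sum>p<N. f r t s p) = (\<Sum>p<N. \<Sum>r<N. \<Sum>s<N. \<Sum>t<N. (f r t s p::'A))"
proof -
  have "(\<Sum>r<N. \<Sum>t<N. \<Sum>s<N. \<Sum>p<N. f r t s p) = (\<Sum>r<N. \<Sum>t<N. \<Sum>p<N. \<Sum>s<N. f r t s p)"
    by (rule sum.cong[OF refl], rule sum.cong[OF refl], rule sum.swap)
  also have "\<dots> = (\<Sum>r<N. \<Sum>p<N. \<Sum>t<N. \<Sum>s<N. f r t s p)"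
    by (rule sum.cong[OF refl], rule sum.swap)
  also have "\<dots> = (\<Sum>p<N. \<Sum>r<N. \<Sum>t<N. \<Sum>s<N. f r t s p)"
    by (rule sum.swap)
  also have "\<dots> = (\<Sum>p<N. \<Sum>r<N. \<Sum>s<N. \<Sum>t<N. f r t s p)"
    by (rule sum.cong[OF refl], rule sum.cong[OF refl], rule sum.swap)
  finally show ?thesis .
qed

lemma X4: "i<N \<Longrightarrow> j<N \<Longrightarrow> m<N \<Longrightarrow> a_tilde N sc a bb i x * bb y j m
   = (\<Sum>p<N. \<Sum>r<N. \<Sum>s<N. \<Sum>t<N. sc (R y x j i t r) * bb y t s * sc (R x (-y) r s p m) * a_tilde N sc a bb p x)"
proof -
  assume ijm: "i<N" "j<N" "m<N"
  have l: "(o1 N (cat x) \<odot> b2 y) i j 0 m = a_tilde N sc a bb i x * bb y j m"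
    using ijm N1 by (simp add: o1_o2_entry cat0)
  have r: "(F y x \<odot> (b2 y \<odot> (S x (-y) \<odot> o1 N (cat x)))) i j 0 m
    = (\<Sum>r<N. \<Sum>t<N. \<Sum>s<N. \<Sum>p<N. sc (R y x j i t r) * bb y t s * sc (R x (-y) r s p m) * a_tilde N sc a bb p x)"
    using ijm N1 by (simp add: E_o2L E_trL S_tr E_o1R F_tr tr_app cat0 sum_distrib_left mult.assoc)
  have c: "(o1 N (cat x) \<odot> b2 y) i j 0 m = (F y x \<odot> (b2 y \<odot> (S x (-y) \<odot> o1 N (cat x)))) i j 0 m"
    by (simp only: C4)
  have e: "(\<Sum>r<N. \<Sum>t<N. \<Sum>s<N. \<Sum>p<N. sc (R y x j i t r) * bb y t s * sc (R x (-y) r s p m) * a_tilde N sc a bb p x)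
     = (\<Sum>p<N. \<Sum>r<N. \<Sum>s<N. \<Sum>t<N. sc (R y x j i t r) * bb y t s * sc (R x (-y) r s p m) * a_tilde N sc a bb p x)"
    by (rule reord)
  show ?thesis using l r c e by metis
qed

lemma X6: "refl_eq N (\<lambda>x y i j p q. sc (R x y i j p q)) bb"
  unfolding refl_eq_def
proof (intro allI)
  fix x y
  have t1: "tr N (\<lambda>i j p q. sc (R x y i j p q)) = S x y" for x y by (simp add: S_tr)
  have t2: "tr N (op21 (\<lambda>x y i j p q. sc (R x y i j p q)) x y) = F x y" for x y
    by (simp add: F_tr op21_def)
  show "eq2 N (mul2 N (mul2 N (mul2 N (\<lambda>i j p q. sc (R x y i j p q)) (op_1 (bb x))) (op21 (\<lambda>x y i j p q. sc (R x y i j p q)) y (-x))) (op_2 (bb y)))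
          (mul2 N (mul2 N (mul2 N (op_2 (bb y)) (\<lambda>i j p q. sc (R x (-y) i j p q))) (op_1 (bb x))) (op21 (\<lambda>x y i j p q. sc (R x y i j p q)) (-y) (-x)))"
    apply (rule tr_eq2)
    apply (simp only: tr_mul2 t1 t2 o1_def[symmetric] o2_def[symmetric] mul2_assoc)
    apply (rule D7)
    done
qed

lemma X7: "inv_pair N bb"
  unfolding inv_pair_def
proof (intro allI impI)
  fix x i j assume ij: "i<N" "j<N"
  have "o1 N (mm1 N (bb x) (bb (-x))) i 0 j 0 = I i 0 j 0" using D8[of x] by (simp only: o1_mul)
  then show "(\<Sum>p<N. bb x i p * bb (-x) p j) = kd i j"
    using ij N1 by (simp add: o1_def tr_app op_1_def mm1_def I2_def id2_def kd_def)
qed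


lemma main_loc: 
   "let Rs = (\<lambda>x y i j p q. sc (R x y i j p q));
        b = bmat N sc T Tinv B;
        aT = a_tilde N sc a b;
        adT = ad_tilde N sc ad b
    in rel_aa N Rs aT
     \<and> rel_dd N Rs adT
     \<and> rel_ad N Rs aT adT (\<lambda>k1 k2 i j. sc (1/2) * dl (k1 - k2) * kd i j + sc (1/2) * dl (k1 + k2) * b k1 i j)
     \<and> (\<forall>k1 k2. \<forall>i<N. \<forall>j<N. \<forall>m<N.
          aT i k1 * b k2 j m
          = (\<Sum>p<N. \<Sum>r<N. \<Sum>s<N. \<Sum>t<N. Rs k2 k1 j i t r * b k2 t s * Rs k1 (-k2) r s p m * aT p k1))
     \<and> (\<forall>k1 k2. \<forall>i<N. \<forall>j<N. \<forall>m<N.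
          b k1 i m * adT j k2
          = (\<Sum>q<N. \<Sum>t<N. \<Sum>s<N. \<Sum>r<N. adT q k2 * Rs k1 k2 i q t s * b k1 t r * Rs k2 (-k1) s r j m))
     \<and> refl_eq N Rs b
     \<and> inv_pair N b"
proof -
  have bq: "bmat N sc T Tinv B = bb" by (intro ext) (simp add: bb_def)
  show ?thesis unfolding Let_def bq
  proof (intro conjI)
    show "rel_aa N (\<lambda>x y i j p q. sc (R x y i j p q)) (a_tilde N sc a bb)"
      unfolding rel_aa_def using X1 by simp
    show "rel_dd N (\<lambda>x y i j p q. sc (R x y i j p q)) (ad_tilde N sc ad bb)"
      unfolding rel_dd_def using X2 by simp
    show "rel_ad N (\<lambda>x y i j p q. sc (R x y i j p q)) (a_tilde N sc a bb) (ad_tilde N sc ad bb)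
     (\<lambda>k1 k2 i j. sc (1 / 2) * dl (k1 - k2) * kd i j + sc (1 / 2) * dl (k1 + k2) * bb k1 i j)"
      unfolding rel_ad_def using X3 by simp
  qed (use X4 X5 X6 X7 in simp_all)
qed

end

theorem mainTheorem1:
  fixes N :: nat
    and R :: "real \<Rightarrow> real \<Rightarrow> nat \<Rightarrow> nat \<Rightarrow> nat \<Rightarrow> nat \<Rightarrow> complex"
    and sc :: "complex \<Rightarrow> 'A::ring_1"
    and dl :: "real \<Rightarrow> 'A"
    and a ad :: "nat \<Rightarrow> real \<Rightarrow> 'A"
    and T Tinv :: "real \<Rightarrow> nat \<Rightarrow> nat \<Rightarrow> 'A"
    and B :: "real \<Rightarrow> nat \<Rightarrow> nat \<Rightarrow> complex"
  assumes "N \<ge> 1"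
    and "yang_baxter N R"
    and "unitary_R N R"
    and "scalars sc"
    and "delta_like dl"
    and "rel_aa N (\<lambda>x y i j p q. sc (R x y i j p q)) a"
    and "rel_dd N (\<lambda>x y i j p q. sc (R x y i j p q)) ad"
    and "rel_ad N (\<lambda>x y i j p q. sc (R x y i j p q)) a ad (\<lambda>k1 k2 i j. dl (k1 - k2) * kd i j)"
    and "well_bred N (\<lambda>x y i j p q. sc (R x y i j p q)) a ad T"
    and "is_inverse N T Tinv"
    and "refl_eq N R B"
    and "inv_pair N B"
  shows
   "let Rs = (\<lambda>x y i j p q. sc (R x y i j p q));
        b = bmat N sc T Tinv B;
        aT = a_tilde N sc a b;
        adT = ad_tilde N sc ad b
    in rel_aa N Rs aT
     \<and> rel_dd N Rs adT
     \<and> rel_ad N Rs aT adT (\<lambda>k1 k2 i j. sc (1/2) * dl (k1 - k2) * kd i j + sc (1/2) * dl (k1 + k2) * b k1 i j)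
     \<and> (\<forall>k1 k2. \<forall>i<N. \<forall>j<N. \<forall>m<N.
          aT i k1 * b k2 j m
          = (\<Sum>p<N. \<Sum>r<N. \<Sum>s<N. \<Sum>t<N. Rs k2 k1 j i t r * b k2 t s * Rs k1 (-k2) r s p m * aT p k1))
     \<and> (\<forall>k1 k2. \<forall>i<N. \<forall>j<N. \<forall>m<N.
          b k1 i m * adT j k2
          = (\<Sum>q<N. \<Sum>t<N. \<Sum>s<N. \<Sum>r<N. adT q k2 * Rs k1 k2 i q t s * b k1 t r * Rs k2 (-k1) s r j m))
     \<and> refl_eq N Rs b
     \<and> inv_pair N b"
proof -
  interpret Z: ZF N R sc dl a ad T Tinv B
    by (rule ZF.intro) (fact assms)+
  show ?thesis by (rule Z.main_loc)
qed

end
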